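(* Let $C,D$ be category presentations. The uncurrying functor $\overline{(-)}:\mathbf{Curr}(C,D)\to\mathbf{UnCurr}(C,D)$ takes values in curryable profunctor presentations and rightward morphisms. Its corestriction $\overline{(-)}:\mathbf{Curr}(C,D)\to\mathbf{Crble}(C,D)$ is an equivalence of categories, and when $C,D$ are finite so is its restriction $\overline{(-)}:\mathbf{FinCurr}(C,D)\to\mathbf{FinCrble}(C,D)$; both preserve and reflect provable equality of morphisms (i.e. $F\approx G$ iff $\overline F\approx\overline G$).
   Context: Category presentations $C$: sorts, function symbols $f:c\to c'$, equations $C_E$ between parallel paths; finite if all these sets are finite; provable equality is the smallest equivalence relation on paths containing the equations and closed under concatenation with composable function symbols. Uncurried presentations $P:C\nrightarrow D$: a set $\mathrm{Fun}(P)$ of symbols $x:c\to d$ ($c$ a $C$-sort, $d$ a $D$-sort) and a set $P_E$ of equations between cross-paths (paths from a $C$-sort to a $D$-sort) of the category presentation $|P|$ with sorts $\mathrm{Sort}(C)+\mathrm{Sort}(D)$, symbols $\mathrm{Fun}(C)+\mathrm{Fun}(P)+\mathrm{Fun}(D)$, equations $C_E+P_E+D_E$; $\approx_P$ is provable equality of $|P|$ restricted to cross-paths. Morphisms $F:P\to P'$ send each $x:c\to d$ to a cross-path $F(x):c\to d$ of $P'$ such that the extension acting as identity on $C$ and $D$ maps every equation of $|P|$ to a provable equality of $|P'|$; composition by substitution; category $\mathbf{UnCurr}(C,D)$; $F\approx F'$ iff $F(x)\approx_{P'}F'(x)$ for all $x$. A short left cross-path is $f.p$ with $f\in\mathrm{Fun}(C)$,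 $p\in\mathrm{Fun}(P)$; a right cross-path is $p.g$ with $p\in\mathrm{Fun}(P)$, $g$ a $D$-path. For a $C$-sort $c$, $P^c$ is the $D$-instance presentation with generators the symbols $p:c\to d$ of $P$ and equations those of $P_E$ with source $c$. $P$ is nongenerative if every short left cross-path is $\approx_P$-equal to a right cross-path, conservative if right cross-paths $t,t'$ from $c$ with $t\approx_P t'$ satisfy $t\approx_{P^c}t'$, and curryable if both. A morphism is rightward if it sends each symbol to a right cross-path. $\mathbf{Crble}(C,D)$ is the (non-full) subcategory of $\mathbf{UnCurr}(C,D)$ with curryable objects and rightward morphisms; $\mathbf{FinCrble}(C,D)$ its full subcategory on presentations with $\mathrm{Fun}(P)$, $P_E$ finite. Instance presentations: a $D$-instance presentation $I$ has generators $x:d$ and equations between terms $x.g$; $\approx_I$ is the smallest equivalence relation on terms containing $I_E$, closed under right concatenation with $D$-function symbols, identifying $t.g,t.g'$ for equations $g=g'$ of $D_E$. Morphisms $F:I\to J$ send generators $x:d$ to terms $F(x):d$ respecting equations up to $\approx_J$; $F(x.g):=F(x).g$; $F\approx G$ iff $F(x)\approx_J G(x)$. Curried presentations $P:C\nrightarrow D$: $D$-instance presentations $P(c)$ and $D$-instance morphisms $P(f):P(c')\to P(c)$ for $f:c\to c'$, with $P(p)\approx P(p')$ for equations $p=p'$ of $C_E$ ($P(f_1.\cdots.f_n):=P(f_n)\circ\cdots\circ P(f_1)$). Morphisms: families $F_c:P(c)\to P'(c)$ with $F_c\circ P(f)\approx P'(f)\circ F_{c'}$; $\mathbf{Curr}(C,D)$;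 $F\approx G$ iff all $F_c\approx G_c$; $\mathbf{FinCurr}(C,D)$ the full subcategory with all $P(c)$ finite. Uncurrying: $\overline P$ has a symbol $\overline p:c\to d$ for each $C$-sort $c$ and generator $p:d$ of $P(c)$; $\overline{p.g}:=\overline p.g$; equations $\overline t=\overline{t'}$ for each equation $t=t'$ of each $P(c)$, and $f.\overline p=\overline{P(f)(p)}$ for each $f:c\to c'$ in $\mathrm{Fun}(C)$ and generator $p$ of $P(c')$. On morphisms $\overline F(\overline p):=\overline{F_c(p)}$. *)

theory Defs
  imports Main
begin

record ('s,'f) catp =
  Sorts :: "'s set"
  Funs  :: "'f set"
  csrc  :: "'f \<Rightarrow> 's"
  ctgt  :: "'f \<Rightarrow> 's"
  Eqs   :: "(('s \<times> 'f list) \<times> ('s \<times> 'f list)) set"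

text \<open>A path is a pair (source sort, list of symbols); the empty list is the identity path.
  path_ok C c fs d: fs is a path of C from c to d.\<close>
fun path_ok :: "('s,'f,'z) catp_scheme \<Rightarrow> 's \<Rightarrow> 'f list \<Rightarrow> 's \<Rightarrow> bool" where
  "path_ok C c [] d = (c = d \<and> c \<in> Sorts C)"
| "path_ok C c (f # fs) d = (c \<in> Sorts C \<and> f \<in> Funs C \<and> csrc C f = c \<and> path_ok C (ctgt C f) fs d)"

definition ptgt :: "('s,'f,'z) catp_scheme \<Rightarrow> 's \<times> 'f list \<Rightarrow> 's" where
  "ptgt C p = (if snd p = [] then fst p else ctgt C (last (snd p)))"

definition wf_catp :: "('s,'f,'z) catp_scheme \<Rightarrow> bool" where
  "wf_catp C \<longleftrightarrow>
     (\<forall>f\<in>Funs C. csrc C f \<in> Sorts C \<and> ctgt C f \<in> Sorts C) \<and>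
     (\<forall>((c,fs),(c',gs))\<in>Eqs C. c = c' \<and> (\<exists>d. path_ok C c fs d \<and> path_ok C c gs d))"

definition fin_catp :: "('s,'f,'z) catp_scheme \<Rightarrow> bool" where
  "fin_catp C \<longleftrightarrow> finite (Sorts C) \<and> finite (Funs C) \<and> finite (Eqs C)"

inductive peq :: "('s,'f,'z) catp_scheme \<Rightarrow> 's \<times> 'f list \<Rightarrow> 's \<times> 'f list \<Rightarrow> bool"
  for C where
  peq_refl: "path_ok C c fs d \<Longrightarrow> peq C (c, fs) (c, fs)"
| peq_eq: "(p, q) \<in> Eqs C \<Longrightarrow> peq C p q"
| peq_sym: "peq C p q \<Longrightarrow> peq C q p"
| peq_trans: "peq C p q \<Longrightarrow> peq C q r \<Longrightarrow> peq C p r"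
| peq_left: "peq C (c, fs) (c, gs) \<Longrightarrow> f \<in> Funs C \<Longrightarrow> ctgt C f = c \<Longrightarrow>
              peq C (csrc C f, f # fs) (csrc C f, f # gs)"
| peq_right: "peq C (c, fs) (c', gs) \<Longrightarrow> f \<in> Funs C \<Longrightarrow> path_ok C c fs (csrc C f) \<Longrightarrow>
              peq C (c, fs @ [f]) (c', gs @ [f])"

record ('d,'fd,'g) instp =
  Gens  :: "'g set"
  gsort :: "'g \<Rightarrow> 'd"
  IEqs  :: "(('g \<times> 'fd list) \<times> ('g \<times> 'fd list)) set"

text \<open>A term x.g is a pair (generator, D-path).\<close>
definition term_ok :: "('d,'fd) catp \<Rightarrow> ('d,'fd,'g) instp \<Rightarrow> 'g \<times> 'fd list \<Rightarrow> 'd \<Rightarrow> bool" where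
  "term_ok D I t d \<longleftrightarrow> fst t \<in> Gens I \<and> path_ok D (gsort I (fst t)) (snd t) d"

definition wf_instp :: "('d,'fd) catp \<Rightarrow> ('d,'fd,'g) instp \<Rightarrow> bool" where
  "wf_instp D I \<longleftrightarrow> (\<forall>x\<in>Gens I. gsort I x \<in> Sorts D) \<and>
     (\<forall>(t,t')\<in>IEqs I. \<exists>d. term_ok D I t d \<and> term_ok D I t' d)"

definition fin_instp :: "('d,'fd,'g) instp \<Rightarrow> bool" where
  "fin_instp I \<longleftrightarrow> finite (Gens I) \<and> finite (IEqs I)"

inductive ieq :: "('d,'fd) catp \<Rightarrow> ('d,'fd,'g) instp \<Rightarrow> 'g \<times> 'fd list \<Rightarrow> 'g \<times> 'fd list \<Rightarrow> bool"
  for D I where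
  ieq_refl: "term_ok D I t d \<Longrightarrow> ieq D I t t"
| ieq_eq: "(t, t') \<in> IEqs I \<Longrightarrow> ieq D I t t'"
| ieq_sym: "ieq D I t t' \<Longrightarrow> ieq D I t' t"
| ieq_trans: "ieq D I t t' \<Longrightarrow> ieq D I t' t'' \<Longrightarrow> ieq D I t t''"
| ieq_right: "ieq D I (x, gs) (y, hs) \<Longrightarrow> f \<in> Funs D \<Longrightarrow> term_ok D I (x, gs) (csrc D f) \<Longrightarrow>
              ieq D I (x, gs @ [f]) (y, hs @ [f])"
| ieq_Deq: "term_ok D I (x, gs) c \<Longrightarrow> ((c, g), (c, g')) \<in> Eqs D \<Longrightarrow>
              ieq D I (x, gs @ g) (x, gs @ g')"

definition iapp :: "('g \<Rightarrow> 'h \<times> 'fd list) \<Rightarrow> 'g \<times> 'fd list \<Rightarrow> 'h \<times> 'fd list" where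
  "iapp F t = (fst (F (fst t)), snd (F (fst t)) @ snd t)"

definition icomp :: "('h \<Rightarrow> 'k \<times> 'fd list) \<Rightarrow> ('g \<Rightarrow> 'h \<times> 'fd list) \<Rightarrow> 'g \<Rightarrow> 'k \<times> 'fd list" where
  "icomp G F x = iapp G (F x)"

definition inst_mor :: "('d,'fd) catp \<Rightarrow> ('d,'fd,'g) instp \<Rightarrow> ('d,'fd,'h) instp \<Rightarrow>
     ('g \<Rightarrow> 'h \<times> 'fd list) \<Rightarrow> bool" where
  "inst_mor D I J F \<longleftrightarrow> (\<forall>x\<in>Gens I. term_ok D J (F x) (gsort I x)) \<and>
     (\<forall>(t,t')\<in>IEqs I. ieq D J (iapp F t) (iapp F t'))"

definition inst_meq :: "('d,'fd) catp \<Rightarrow> ('d,'fd,'g) instp \<Rightarrow> ('d,'fd,'h) instp \<Rightarrow>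
     ('g \<Rightarrow> 'h \<times> 'fd list) \<Rightarrow> ('g \<Rightarrow> 'h \<times> 'fd list) \<Rightarrow> bool" where
  "inst_meq D I J F G \<longleftrightarrow> (\<forall>x\<in>Gens I. ieq D J (F x) (G x))"

record ('c,'d,'fc,'fd,'g) currp =
  Inst :: "'c \<Rightarrow> ('d,'fd,'g) instp"
  Act  :: "'fc \<Rightarrow> 'g \<Rightarrow> 'g \<times> 'fd list"

text \<open>P(f1. ... .fn) = P(f1) o ... o P(fn) (a morphism P(c_n) \<rightarrow> P(c_0)).\<close>
fun pact :: "('c,'d,'fc,'fd,'g) currp \<Rightarrow> 'fc list \<Rightarrow> 'g \<Rightarrow> 'g \<times> 'fd list" where
  "pact P [] x = (x, [])"
| "pact P (f # fs) x = iapp (Act P f) (pact P fs x)"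

definition wf_currp :: "('c,'fc) catp \<Rightarrow> ('d,'fd) catp \<Rightarrow> ('c,'d,'fc,'fd,'g) currp \<Rightarrow> bool" where
  "wf_currp C D P \<longleftrightarrow>
     (\<forall>c\<in>Sorts C. wf_instp D (Inst P c)) \<and>
     (\<forall>f\<in>Funs C. inst_mor D (Inst P (ctgt C f)) (Inst P (csrc C f)) (Act P f)) \<and>
     (\<forall>(p,p')\<in>Eqs C. inst_meq D (Inst P (ptgt C p)) (Inst P (fst p)) (pact P (snd p)) (pact P (snd p')))"

definition fin_currp :: "('c,'fc) catp \<Rightarrow> ('c,'d,'fc,'fd,'g) currp \<Rightarrow> bool" where
  "fin_currp C P \<longleftrightarrow> (\<forall>c\<in>Sorts C. fin_instp (Inst P c))"

definition curr_mor :: "('c,'fc) catp \<Rightarrow> ('d,'fd) catp \<Rightarrow> ('c,'d,'fc,'fd,'g) currp \<Rightarrow>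
    ('c,'d,'fc,'fd,'h) currp \<Rightarrow> ('c \<Rightarrow> 'g \<Rightarrow> 'h \<times> 'fd list) \<Rightarrow> bool" where
  "curr_mor C D P Q F \<longleftrightarrow>
     (\<forall>c\<in>Sorts C. inst_mor D (Inst P c) (Inst Q c) (F c)) \<and>
     (\<forall>f\<in>Funs C. inst_meq D (Inst P (ctgt C f)) (Inst Q (csrc C f))
         (icomp (F (csrc C f)) (Act P f)) (icomp (Act Q f) (F (ctgt C f))))"

definition curr_meq :: "('c,'fc) catp \<Rightarrow> ('d,'fd) catp \<Rightarrow> ('c,'d,'fc,'fd,'g) currp \<Rightarrow>
    ('c,'d,'fc,'fd,'h) currp \<Rightarrow> ('c \<Rightarrow> 'g \<Rightarrow> 'h \<times> 'fd list) \<Rightarrow> ('c \<Rightarrow> 'g \<Rightarrow> 'h \<times> 'fd list) \<Rightarrow> bool" where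
  "curr_meq C D P Q F G \<longleftrightarrow> (\<forall>c\<in>Sorts C. inst_meq D (Inst P c) (Inst Q c) (F c) (G c))"

definition curr_id :: "'c \<Rightarrow> 'g \<Rightarrow> 'g \<times> 'fd list" where
  "curr_id c x = (x, [])"

definition curr_comp :: "('c \<Rightarrow> 'h \<Rightarrow> 'k \<times> 'fd list) \<Rightarrow> ('c \<Rightarrow> 'g \<Rightarrow> 'h \<times> 'fd list) \<Rightarrow>
    'c \<Rightarrow> 'g \<Rightarrow> 'k \<times> 'fd list" where
  "curr_comp G F c = icomp (G c) (F c)"

type_synonym ('c,'d,'fc,'fd,'p) xpath = "('c + 'd) \<times> ('fc + 'p + 'fd) list"

record ('c,'d,'fc,'fd,'p) ucp =
  UFuns :: "'p set"
  usrc  :: "'p \<Rightarrow> 'c"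
  utgt  :: "'p \<Rightarrow> 'd"
  UEqs  :: "(('c,'d,'fc,'fd,'p) xpath \<times> ('c,'d,'fc,'fd,'p) xpath) set"

definition total :: "('c,'fc) catp \<Rightarrow> ('d,'fd) catp \<Rightarrow> ('c,'d,'fc,'fd,'p) ucp \<Rightarrow>
    ('c + 'd, 'fc + 'p + 'fd) catp" where
  "total C D P = \<lparr>
     Sorts = Inl ` Sorts C \<union> Inr ` Sorts D,
     Funs = Inl ` Funs C \<union> (Inr \<circ> Inl) ` UFuns P \<union> (Inr \<circ> Inr) ` Funs D,
     csrc = case_sum (Inl \<circ> csrc C) (case_sum (Inl \<circ> usrc P) (Inr \<circ> csrc D)),
     ctgt = case_sum (Inl \<circ> ctgt C) (case_sum (Inr \<circ> utgt P) (Inr \<circ> ctgt D)),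
     Eqs = (\<lambda>((c,fs),(c',gs)). ((Inl c, map Inl fs), (Inl c', map Inl gs))) ` Eqs C
           \<union> UEqs P
           \<union> (\<lambda>((c,fs),(c',gs)). ((Inr c, map (Inr \<circ> Inr) fs), (Inr c', map (Inr \<circ> Inr) gs))) ` Eqs D \<rparr>"

definition cross_path :: "('c,'fc) catp \<Rightarrow> ('d,'fd) catp \<Rightarrow> ('c,'d,'fc,'fd,'p) ucp \<Rightarrow>
    'c \<Rightarrow> 'd \<Rightarrow> ('c,'d,'fc,'fd,'p) xpath \<Rightarrow> bool" where
  "cross_path C D P c d x \<longleftrightarrow> fst x = Inl c \<and> path_ok (total C D P) (Inl c) (snd x) (Inr d)"

definition wf_ucp :: "('c,'fc) catp \<Rightarrow> ('d,'fd) catp \<Rightarrow> ('c,'d,'fc,'fd,'p) ucp \<Rightarrow> bool" where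
  "wf_ucp C D P \<longleftrightarrow> (\<forall>p\<in>UFuns P. usrc P p \<in> Sorts C \<and> utgt P p \<in> Sorts D) \<and>
     (\<forall>(s,t)\<in>UEqs P. \<exists>c d. cross_path C D P c d s \<and> cross_path C D P c d t)"

definition fin_ucp :: "('c,'d,'fc,'fd,'p) ucp \<Rightarrow> bool" where
  "fin_ucp P \<longleftrightarrow> finite (UFuns P) \<and> finite (UEqs P)"

definition uext :: "('p \<Rightarrow> ('c,'d,'fc,'fd,'q) xpath) \<Rightarrow> ('c,'d,'fc,'fd,'p) xpath \<Rightarrow> ('c,'d,'fc,'fd,'q) xpath" where
  "uext F x = (fst x, concat (map (\<lambda>s. case s of Inl f \<Rightarrow> [Inl f]
                                            | Inr (Inl p) \<Rightarrow> snd (F p)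
                                            | Inr (Inr g) \<Rightarrow> [Inr (Inr g)]) (snd x)))"

definition ucp_mor :: "('c,'fc) catp \<Rightarrow> ('d,'fd) catp \<Rightarrow> ('c,'d,'fc,'fd,'p) ucp \<Rightarrow>
    ('c,'d,'fc,'fd,'q) ucp \<Rightarrow> ('p \<Rightarrow> ('c,'d,'fc,'fd,'q) xpath) \<Rightarrow> bool" where
  "ucp_mor C D P Q F \<longleftrightarrow>
     (\<forall>p\<in>UFuns P. cross_path C D Q (usrc P p) (utgt P p) (F p)) \<and>
     (\<forall>(s,t)\<in>Eqs (total C D P). peq (total C D Q) (uext F s) (uext F t))"

definition ucp_meq :: "('c,'fc) catp \<Rightarrow> ('d,'fd) catp \<Rightarrow> ('c,'d,'fc,'fd,'p) ucp \<Rightarrow>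
    ('c,'d,'fc,'fd,'q) ucp \<Rightarrow> ('p \<Rightarrow> ('c,'d,'fc,'fd,'q) xpath) \<Rightarrow> ('p \<Rightarrow> ('c,'d,'fc,'fd,'q) xpath) \<Rightarrow> bool" where
  "ucp_meq C D P Q F G \<longleftrightarrow> (\<forall>p\<in>UFuns P. peq (total C D Q) (F p) (G p))"

definition ucp_id :: "('c,'d,'fc,'fd,'p) ucp \<Rightarrow> 'p \<Rightarrow> ('c,'d,'fc,'fd,'p) xpath" where
  "ucp_id P p = (Inl (usrc P p), [Inr (Inl p)])"

definition ucp_comp :: "('q \<Rightarrow> ('c,'d,'fc,'fd,'r) xpath) \<Rightarrow> ('p \<Rightarrow> ('c,'d,'fc,'fd,'q) xpath) \<Rightarrow>
    'p \<Rightarrow> ('c,'d,'fc,'fd,'r) xpath" where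
  "ucp_comp G F p = uext G (F p)"

definition rcp :: "('c,'d,'fc,'fd,'p) ucp \<Rightarrow> 'p \<Rightarrow> 'fd list \<Rightarrow> ('c,'d,'fc,'fd,'p) xpath" where
  "rcp P p g = (Inl (usrc P p), Inr (Inl p) # map (Inr \<circ> Inr) g)"

definition right_cross :: "('d,'fd) catp \<Rightarrow> ('c,'d,'fc,'fd,'p) ucp \<Rightarrow> ('c,'d,'fc,'fd,'p) xpath \<Rightarrow> bool" where
  "right_cross D P x \<longleftrightarrow> (\<exists>p g d. p \<in> UFuns P \<and> path_ok D (utgt P p) g d \<and> x = rcp P p g)"

definition nongenerative :: "('c,'fc) catp \<Rightarrow> ('d,'fd) catp \<Rightarrow> ('c,'d,'fc,'fd,'p) ucp \<Rightarrow> bool" where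
  "nongenerative C D P \<longleftrightarrow>
     (\<forall>f\<in>Funs C. \<forall>p\<in>UFuns P. ctgt C f = usrc P p \<longrightarrow>
        (\<exists>x. right_cross D P x \<and> peq (total C D P) (Inl (csrc C f), [Inl f, Inr (Inl p)]) x))"

definition ucp_at :: "('c,'d,'fc,'fd,'p) ucp \<Rightarrow> 'c \<Rightarrow> ('d,'fd,'p) instp" where
  "ucp_at P c = \<lparr> Gens = {p\<in>UFuns P. usrc P p = c}, gsort = utgt P,
     IEqs = {((p,g),(p',g')). (rcp P p g, rcp P p' g') \<in> UEqs P \<and> usrc P p = c \<and> usrc P p' = c} \<rparr>"

definition conservative :: "('c,'fc) catp \<Rightarrow> ('d,'fd) catp \<Rightarrow> ('c,'d,'fc,'fd,'p) ucp \<Rightarrow> bool" where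
  "conservative C D P \<longleftrightarrow>
     (\<forall>c p g d p' g' d'. p \<in> UFuns P \<and> p' \<in> UFuns P \<and> usrc P p = c \<and> usrc P p' = c \<and>
        path_ok D (utgt P p) g d \<and> path_ok D (utgt P p') g' d' \<and>
        peq (total C D P) (rcp P p g) (rcp P p' g') \<longrightarrow> ieq D (ucp_at P c) (p, g) (p', g'))"

definition curryable :: "('c,'fc) catp \<Rightarrow> ('d,'fd) catp \<Rightarrow> ('c,'d,'fc,'fd,'p) ucp \<Rightarrow> bool" where
  "curryable C D P \<longleftrightarrow> nongenerative C D P \<and> conservative C D P"

definition rightward :: "('d,'fd) catp \<Rightarrow> ('c,'d,'fc,'fd,'p) ucp \<Rightarrow> ('c,'d,'fc,'fd,'q) ucp \<Rightarrow>
    ('p \<Rightarrow> ('c,'d,'fc,'fd,'q) xpath) \<Rightarrow> bool" where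
  "rightward D P Q F \<longleftrightarrow> (\<forall>p\<in>UFuns P. right_cross D Q (F p))"

definition ov :: "'c \<Rightarrow> 'g \<times> 'fd list \<Rightarrow> ('c,'d,'fc,'fd,'c \<times> 'g) xpath" where
  "ov c t = (Inl c, Inr (Inl (c, fst t)) # map (Inr \<circ> Inr) (snd t))"

definition uncurry :: "('c,'fc) catp \<Rightarrow> ('c,'d,'fc,'fd,'g) currp \<Rightarrow> ('c,'d,'fc,'fd,'c \<times> 'g) ucp" where
  "uncurry C P = \<lparr>
     UFuns = Sigma (Sorts C) (\<lambda>c. Gens (Inst P c)),
     usrc = fst,
     utgt = (\<lambda>(c,p). gsort (Inst P c) p),
     UEqs = {(ov c t, ov c t') | c t t'. c \<in> Sorts C \<and> (t, t') \<in> IEqs (Inst P c)}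
          \<union> {((Inl (csrc C f), [Inl f, Inr (Inl (ctgt C f, p))]), ov (csrc C f) (Act P f p)) | f p.
                f \<in> Funs C \<and> p \<in> Gens (Inst P (ctgt C f))} \<rparr>"

definition uncurry_mor :: "('c \<Rightarrow> 'g \<Rightarrow> 'h \<times> 'fd list) \<Rightarrow> 'c \<times> 'g \<Rightarrow> ('c,'d,'fc,'fd,'c \<times> 'h) xpath" where
  "uncurry_mor F x = ov (fst x) (F (fst x) (snd x))"

end

theory Submission
  imports Defs
begin

lemma path_ok_src: "path_ok C c fs d \<Longrightarrow> c \<in> Sorts C"
  by (cases fs) auto

lemma path_ok_append:
  "path_ok C c (xs @ ys) e \<longleftrightarrow> (\<exists>d. path_ok C c xs d \<and> path_ok C d ys e)"
  by (induction xs arbitrary: c) (auto dest: path_ok_src)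

lemma path_ok_det: "path_ok C c fs d \<Longrightarrow> path_ok C c fs d' \<Longrightarrow> d = d'"
  by (induction fs arbitrary: c) auto

lemma path_ok_tgt: "wf_catp C \<Longrightarrow> path_ok C c fs d \<Longrightarrow> d \<in> Sorts C"
  by (induction fs arbitrary: c) (auto simp: wf_catp_def)

lemma ptgt_path: "path_ok C c fs d \<Longrightarrow> ptgt C (c, fs) = d"
proof (induction fs arbitrary: c)
  case Nil then show ?case by (simp add: ptgt_def)
next
  case (Cons f fs)
  then show ?case by (cases fs) (auto simp: ptgt_def)
qed

lemma peq_typed:
  assumes "wf_catp C" "peq C s t"
  shows "fst s = fst t \<and> (\<exists>d. path_ok C (fst s) (snd s) d \<and> path_ok C (fst t) (snd t) d)"
  using assms(2)
proof (induction rule: peq.induct)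
  case (peq_refl c fs d) then show ?case by auto
next
  case (peq_eq p q)
  then show ?case using assms(1) unfolding wf_catp_def by fastforce
next
  case (peq_sym p q) then show ?case by auto
next
  case (peq_trans p q r) then show ?case by (metis path_ok_det)
next
  case (peq_left c fs gs f)
  then show ?case using assms(1) unfolding wf_catp_def by auto
next
  case (peq_right c fs c' gs f)
  then obtain d where "path_ok C c fs d" "path_ok C c' gs d" "c = c'" by auto
  moreover have "d = csrc C f" using peq_right path_ok_det calculation by metis
  ultimately show ?case using peq_right assms(1) unfolding wf_catp_def
    by (auto simp: path_ok_append)
qed

lemma peq_suffix:
  "peq C (a, xs) (b, ys) \<Longrightarrow> path_ok C a xs e \<Longrightarrow> path_ok C e zs e' \<Longrightarrow>
   peq C (a, xs @ zs) (b, ys @ zs)"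
proof (induction zs arbitrary: xs ys e)
  case Nil then show ?case by simp
next
  case (Cons z zs)
  have "peq C (a, xs @ [z]) (b, ys @ [z])"
    using Cons.prems by (intro peq_right) auto
  moreover have "path_ok C a (xs @ [z]) (ctgt C z)"
    using Cons.prems by (auto simp: path_ok_append dest: path_ok_src)
  ultimately have "peq C (a, (xs @ [z]) @ zs) (b, (ys @ [z]) @ zs)"
    using Cons by (intro Cons.IH) auto
  then show ?case by simp
qed

lemma peq_prefix:
  "peq C (a, xs) (a, ys) \<Longrightarrow> path_ok C b zs a \<Longrightarrow> peq C (b, zs @ xs) (b, zs @ ys)"
proof (induction zs arbitrary: b)
  case Nil then show ?case by simp
next
  case (Cons z zs)
  then have "peq C (ctgt C z, zs @ xs) (ctgt C z, zs @ ys)" by auto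
  then have "peq C (csrc C z, z # zs @ xs) (csrc C z, z # zs @ ys)"
    using Cons.prems by (intro peq_left) auto
  then show ?case using Cons.prems by auto
qed

lemma term_ok_app:
  "term_ok D I (x, k) d \<Longrightarrow> path_ok D d g e \<Longrightarrow> term_ok D I (x, k @ g) e"
  by (auto simp: term_ok_def path_ok_append)

lemma ieq_suffix:
  "ieq D I t t' \<Longrightarrow> term_ok D I t d \<Longrightarrow> path_ok D d g e \<Longrightarrow>
   ieq D I (fst t, snd t @ g) (fst t', snd t' @ g)"
proof (induction g arbitrary: t t' d)
  case Nil then show ?case by simp
next
  case (Cons f g)
  obtain x gs y hs where t: "t = (x, gs)" "t' = (y, hs)" by (cases t, cases t')
  have "ieq D I (x, gs @ [f]) (y, hs @ [f])"
    using Cons.prems t by (intro ieq_right) auto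
  moreover have "term_ok D I (x, gs @ [f]) (ctgt D f)"
    using Cons.prems t by (intro term_ok_app[where d=d]) (auto dest: path_ok_src)
  ultimately have "ieq D I (x, (gs @ [f]) @ g) (y, (hs @ [f]) @ g)"
    using Cons.IH[of "(x, gs @ [f])" "(y, hs @ [f])"] Cons.prems by auto
  then show ?case using t by simp
qed

lemma iapp_term_ok:
  "inst_mor D I J F \<Longrightarrow> term_ok D I t d \<Longrightarrow> term_ok D J (iapp F t) d"
  unfolding inst_mor_def term_ok_def iapp_def by (auto simp: path_ok_append)

lemma ieq_mor:
  assumes "inst_mor D I J F" "ieq D I t t'"
  shows "ieq D J (iapp F t) (iapp F t')"
  using assms(2)
proof (induction rule: ieq.induct)
  case (ieq_refl t d) then show ?case using assms(1) by (metis iapp_term_ok ieq.ieq_refl)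
next
  case (ieq_eq t t') then show ?case using assms(1) unfolding inst_mor_def by auto
next
  case (ieq_sym t t') from ieq_sym.IH show ?case by (rule ieq.ieq_sym)
next
  case (ieq_trans t t' t'') then show ?case by (metis ieq.ieq_trans)
next
  case (ieq_right x gs y hs f)
  have "term_ok D J (iapp F (x, gs)) (csrc D f)"
    using ieq_right assms(1) by (intro iapp_term_ok) auto
  then have "ieq D J (fst (iapp F (x, gs)), snd (iapp F (x, gs)) @ [f]) (fst (iapp F (y, hs)), snd (iapp F (y, hs)) @ [f])"
    using ieq_right by (intro ieq.ieq_right) (auto simp: iapp_def)
  then show ?case by (simp add: iapp_def)
next
  case (ieq_Deq x gs c g g')
  have "term_ok D J (iapp F (x, gs)) c"
    using ieq_Deq assms(1) by (intro iapp_term_ok) auto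
  then have "ieq D J (fst (iapp F (x, gs)), snd (iapp F (x, gs)) @ g) (fst (iapp F (x, gs)), snd (iapp F (x, gs)) @ g')"
    using ieq_Deq by (intro ieq.ieq_Deq) (auto simp: iapp_def)
  then show ?case by (simp add: iapp_def)
qed

lemma ieq_meq:
  assumes "inst_meq D I J F G" "inst_mor D I J F" "term_ok D I t d"
  shows "ieq D J (iapp F t) (iapp G t)"
proof -
  have "ieq D J (F (fst t)) (G (fst t))" "term_ok D J (F (fst t)) (gsort I (fst t))"
    using assms unfolding inst_meq_def inst_mor_def term_ok_def by auto
  from ieq_suffix[OF this, of "snd t" d] show ?thesis
    using assms(3) by (simp add: iapp_def term_ok_def)
qed

lemma iapp_assoc: "iapp F (iapp G t) = iapp (\<lambda>y. iapp F (G y)) t"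
  by (simp add: iapp_def)

lemma iapp_id [simp]: "iapp (\<lambda>x. (x, [])) t = t"
  by (simp add: iapp_def)

lemma iapp_gen [simp]: "iapp F (x, []) = F x"
  by (simp add: iapp_def)

lemma inst_mor_comp:
  "inst_mor D I J F \<Longrightarrow> inst_mor D J K G \<Longrightarrow> inst_mor D I K (icomp G F)"
  unfolding inst_mor_def icomp_def
  apply (intro conjI)
  subgoal by (auto intro: iapp_term_ok[unfolded inst_mor_def])
  subgoal
  proof (clarify)
    fix t t' assume "(t, t') \<in> IEqs I" and h: "\<forall>x\<in>Gens I. term_ok D J (F x) (gsort I x)"
      "\<forall>(t, t')\<in>IEqs I. ieq D J (iapp F t) (iapp F t')" "\<forall>x\<in>Gens J. term_ok D K (G x) (gsort J x)"
      "\<forall>(t, t')\<in>IEqs J. ieq D K (iapp G t) (iapp G t')"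
    then have "ieq D J (iapp F t) (iapp F t')" by auto
    then have "ieq D K (iapp G (iapp F t)) (iapp G (iapp F t'))"
      using h by (intro ieq_mor[of D J K G]) (auto simp: inst_mor_def)
    then show "ieq D K (iapp (\<lambda>x. iapp G (F x)) t) (iapp (\<lambda>x. iapp G (F x)) t')"
      by (simp add: iapp_assoc)
  qed
  done

lemma inst_mor_id: "wf_instp D I \<Longrightarrow> inst_mor D I I (\<lambda>x. (x, []))"
  unfolding inst_mor_def wf_instp_def term_ok_def by (auto intro: ieq_eq)

lemma pact_append: "pact P (fs @ gs) x = iapp (pact P fs) (pact P gs x)"
  by (induction fs) (auto simp: iapp_assoc)

lemma pact_Cons_fun: "pact P (f # fs) = icomp (Act P f) (pact P fs)"
  by (rule ext) (simp add: icomp_def)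

lemma pact_Nil_fun: "pact P [] = (\<lambda>x. (x, []))"
  by (rule ext) simp

definition wfc0 :: "('c,'fc) catp \<Rightarrow> ('d,'fd) catp \<Rightarrow> ('c,'d,'fc,'fd,'g) currp \<Rightarrow> bool" where
  "wfc0 C D P \<longleftrightarrow> (\<forall>c\<in>Sorts C. wf_instp D (Inst P c)) \<and>
     (\<forall>f\<in>Funs C. inst_mor D (Inst P (ctgt C f)) (Inst P (csrc C f)) (Act P f))"

lemma wfc0I: "wf_currp C D P \<Longrightarrow> wfc0 C D P"
  by (simp add: wf_currp_def wfc0_def)

lemma pact_mor:
  assumes "wfc0 C D P" "wf_catp C"
  shows "path_ok C c fs c' \<Longrightarrow> inst_mor D (Inst P c') (Inst P c) (pact P fs)"
proof (induction fs arbitrary: c)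
  case Nil
  then show ?case using assms unfolding wfc0_def
    by (auto simp: pact_Nil_fun intro!: inst_mor_id)
next
  case (Cons f fs)
  then have "inst_mor D (Inst P c') (Inst P (ctgt C f)) (pact P fs)" by auto
  moreover have "inst_mor D (Inst P (ctgt C f)) (Inst P c) (Act P f)"
    using Cons.prems assms unfolding wfc0_def by auto
  ultimately show ?case by (simp add: pact_Cons_fun inst_mor_comp)
qed

section \<open>Total presentation\<close>

definition xp :: "'c \<Rightarrow> 'fc list \<Rightarrow> 'p \<Rightarrow> 'fd list \<Rightarrow> ('c,'d,'fc,'fd,'p) xpath" where
  "xp c fs p g = (Inl c, map Inl fs @ Inr (Inl p) # map (Inr \<circ> Inr) g)"

lemma ov_xp: "ov c t = xp c [] (c, fst t) (snd t)"
  by (simp add: ov_def xp_def)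

lemma fst_xp [simp]: "fst (xp c fs p g) = Inl c"
  by (simp add: xp_def)

lemma rcp_xp: "rcp P p g = xp (usrc P p) [] p g"
  by (simp add: rcp_def xp_def)

lemma map_Inl_eq_iff:
  "(map Inl fs @ Inr a # xs = map Inl fs' @ Inr a' # xs') \<longleftrightarrow> fs = fs' \<and> a = a' \<and> xs = xs'"
proof (induction fs arbitrary: fs')
  case Nil then show ?case by (cases fs') auto
next
  case (Cons f fs) then show ?case by (cases fs') auto
qed

lemma map_Inl_neq: "map Inl fs \<noteq> map Inl fs' @ Inr a # xs"
proof (induction fs arbitrary: fs')
  case Nil then show ?case by (cases fs') auto
next
  case (Cons f fs) then show ?case by (cases fs') auto
qed

lemma map_InrInr_eq_iff [simp]: "(map (Inr \<circ> Inr) g = map (Inr \<circ> Inr) h) \<longleftrightarrow> g = h"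
  by (simp add: inj_map_eq_map inj_def)

lemma xp_eq_iff [simp]: "xp c fs p g = xp c' fs' p' g' \<longleftrightarrow> c = c' \<and> fs = fs' \<and> p = p' \<and> g = g'"
  by (auto simp: xp_def map_Inl_eq_iff)

lemma total_simps [simp]:
  "Sorts (total C D Q) = Inl ` Sorts C \<union> Inr ` Sorts D"
  "Funs (total C D Q) = Inl ` Funs C \<union> (Inr \<circ> Inl) ` UFuns Q \<union> (Inr \<circ> Inr) ` Funs D"
  "csrc (total C D Q) (Inl f) = Inl (csrc C f)"
  "csrc (total C D Q) (Inr (Inl p)) = Inl (usrc Q p)"
  "csrc (total C D Q) (Inr (Inr g)) = Inr (csrc D g)"
  "ctgt (total C D Q) (Inl f) = Inl (ctgt C f)"
  "ctgt (total C D Q) (Inr (Inl p)) = Inr (utgt Q p)"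
  "ctgt (total C D Q) (Inr (Inr g)) = Inr (ctgt D g)"
  by (simp_all add: total_def)

lemma total_mem [simp]:
  "Inl c \<in> Inl ` A \<union> Inr ` B \<longleftrightarrow> c \<in> A"
  "Inr d \<in> Inl ` A \<union> Inr ` B \<longleftrightarrow> d \<in> B"
  "Inl f \<in> Inl ` F \<union> (Inr \<circ> Inl) ` U \<union> (Inr \<circ> Inr) ` G \<longleftrightarrow> f \<in> F"
  "Inr (Inl p) \<in> Inl ` F \<union> (Inr \<circ> Inl) ` U \<union> (Inr \<circ> Inr) ` G \<longleftrightarrow> p \<in> U"
  "Inr (Inr g) \<in> Inl ` F \<union> (Inr \<circ> Inl) ` U \<union> (Inr \<circ> Inr) ` G \<longleftrightarrow> g \<in> G"
  by auto

lemma path_D: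
  "path_ok (total C D Q) (Inr d) (map (Inr \<circ> Inr) g) e \<longleftrightarrow> (\<exists>d'. e = Inr d' \<and> path_ok D d g d')"
  by (induction g arbitrary: d) auto

lemma path_D_any:
  "path_ok (total C D Q) (Inr d) xs e \<Longrightarrow> \<exists>g d'. xs = map (Inr \<circ> Inr) g \<and> e = Inr d' \<and> path_ok D d g d'"
proof (induction xs arbitrary: d)
  case Nil then show ?case by auto
next
  case (Cons x xs)
  then show ?case
  proof (cases x)
    case (Inl f) then show ?thesis using Cons by auto
  next
    case (Inr y)
    then show ?thesis
    proof (cases y)
      case (Inl p) then show ?thesis using Cons Inr by auto
    next
      case (Inr g0)
      with Cons.prems \<open>x = _\<close> have h: "g0 \<in> Funs D" "csrc D g0 = d" "path_ok (total C D Q) (Inr (ctgt D g0)) xs e"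
        by auto
      from Cons.IH[OF h(3)] obtain g d' where "xs = map (Inr \<circ> Inr) g" "e = Inr d'" "path_ok D (ctgt D g0) g d'"
        by blast
      then show ?thesis using h Cons.prems \<open>x = _\<close> Inr
        by (intro exI[of _ "g0 # g"]) (auto dest: path_ok_src)
    qed
  qed
qed

lemma path_C:
  "path_ok (total C D Q) (Inl c) (map Inl fs) e \<longleftrightarrow> (\<exists>c'. e = Inl c' \<and> path_ok C c fs c')"
  by (induction fs arbitrary: c) auto

lemma path_C_app:
  "path_ok (total C D Q) (Inl c) (map Inl fs @ rest) e \<longleftrightarrow>
   (\<exists>c'. path_ok C c fs c' \<and> path_ok (total C D Q) (Inl c') rest e)"
  by (auto simp: path_ok_append path_C)

lemma path_xp:
  assumes "wf_catp C"
  shows "path_ok (total C D Q) (Inl c) (snd (xp c fs p g)) e \<longleftrightarrow>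
    path_ok C c fs (usrc Q p) \<and> p \<in> UFuns Q \<and> (\<exists>d. e = Inr d \<and> path_ok D (utgt Q p) g d)"
  using path_ok_tgt[OF assms] by (auto simp: xp_def path_C_app path_D)

lemma path_any_C:
  "path_ok (total C D Q) (Inl c) xs e \<Longrightarrow>
   (\<exists>fs c'. xs = map Inl fs \<and> e = Inl c' \<and> path_ok C c fs c') \<or>
   (\<exists>fs p g d. xs = map Inl fs @ Inr (Inl p) # map (Inr \<circ> Inr) g \<and> path_ok C c fs (usrc Q p) \<and> p \<in> UFuns Q \<and>
       path_ok D (utgt Q p) g d \<and> e = Inr d)"
proof (induction xs arbitrary: c)
  case Nil then show ?case by (intro disjI1 exI[of _ "[]"]) auto
next
  case (Cons x xs)
  show ?case
  proof (cases x)
    case (Inl f)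
    with Cons.prems have f: "f \<in> Funs C" "csrc C f = c" "c \<in> Sorts C"
      "path_ok (total C D Q) (Inl (ctgt C f)) xs e" by auto
    from Cons.IH[OF f(4)] show ?thesis
    proof
      assume "\<exists>fs c'. xs = map Inl fs \<and> e = Inl c' \<and> path_ok C (ctgt C f) fs c'"
      then obtain fs c' where "xs = map Inl fs" "e = Inl c'" "path_ok C (ctgt C f) fs c'" by blast
      then show ?thesis using f Inl by (intro disjI1 exI[of _ "f # fs"]) auto
    next
      assume "\<exists>fs p g d. xs = map Inl fs @ Inr (Inl p) # map (Inr \<circ> Inr) g \<and> path_ok C (ctgt C f) fs (usrc Q p) \<and> p \<in> UFuns Q \<and>
       path_ok D (utgt Q p) g d \<and> e = Inr d"
      then obtain fs p g d where "xs = map Inl fs @ Inr (Inl p) # map (Inr \<circ> Inr) g" "path_ok C (ctgt C f) fs (usrc Q p)"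
        "p \<in> UFuns Q" "path_ok D (utgt Q p) g d" "e = Inr d" by blast
      then show ?thesis using f Inl by (intro disjI2 exI[of _ "f # fs"] exI[of _ p] exI[of _ g] exI[of _ d]) auto
    qed
  next
    case (Inr y)
    show ?thesis
    proof (cases y)
      case (Inl p)
      with Cons.prems Inr have p: "p \<in> UFuns Q" "usrc Q p = c" "c \<in> Sorts C"
        "path_ok (total C D Q) (Inr (utgt Q p)) xs e" by auto
      from path_D_any[OF p(4)] obtain g d' where "xs = map (Inr \<circ> Inr) g" "e = Inr d'" "path_ok D (utgt Q p) g d'"
        by blast
      then show ?thesis using p Inr Inl by (intro disjI2 exI[of _ "[]"] exI[of _ p] exI[of _ g] exI[of _ d']) auto
    next
      case (Inr g) with Cons.prems \<open>x = _\<close> show ?thesis by auto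
    qed
  qed
qed

lemma mem_image_split:
  "((c,fs),(c',gs)) \<in> (\<lambda>((a,b),(a',b')). ((f a, h b),(f a', h b'))) ` S \<longleftrightarrow>
   (\<exists>a b a' b'. ((a,b),(a',b')) \<in> S \<and> c = f a \<and> fs = h b \<and> c' = f a' \<and> gs = h b')"
  by (auto simp: image_iff) force

lemma wf_total:
  assumes "wf_catp C" "wf_catp D" "wf_ucp C D Q"
  shows "wf_catp (total C D Q)"
proof -
  have F: "\<forall>f\<in>Funs (total C D Q). csrc (total C D Q) f \<in> Sorts (total C D Q) \<and> ctgt (total C D Q) f \<in> Sorts (total C D Q)"
    using assms unfolding wf_catp_def wf_ucp_def by auto
  have E1: "\<And>c fs c' gs. ((c,fs),(c',gs)) \<in> Eqs C \<Longrightarrow> Inl c = Inl c' \<and>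
      (\<exists>d. path_ok (total C D Q) (Inl c) (map Inl fs) d \<and> path_ok (total C D Q) (Inl c) (map Inl gs) d)"
    using assms(1) unfolding wf_catp_def by (fastforce simp: path_C)
  have E2: "\<And>c fs c' gs. ((c,fs),(c',gs)) \<in> Eqs D \<Longrightarrow> Inr c = Inr c' \<and>
      (\<exists>d. path_ok (total C D Q) (Inr c) (map (Inr \<circ> Inr) fs) d \<and> path_ok (total C D Q) (Inr c) (map (Inr \<circ> Inr) gs) d)"
    using assms(2) unfolding wf_catp_def by (fastforce simp: path_D)
  have E3: "\<And>c fs c' gs. ((c,fs),(c',gs)) \<in> UEqs Q \<Longrightarrow> c = c' \<and>
      (\<exists>d. path_ok (total C D Q) c fs d \<and> path_ok (total C D Q) c gs d)"
    using assms(3) unfolding wf_ucp_def cross_path_def by fastforce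
  have E: "\<forall>((c,fs),(c',gs))\<in>Eqs (total C D Q). c = c' \<and> (\<exists>d. path_ok (total C D Q) c fs d \<and> path_ok (total C D Q) c gs d)"
  proof (clarify)
    fix c fs c' gs assume "((c, fs), (c', gs)) \<in> Eqs (total C D Q)"
    then have "((c, fs), (c', gs)) \<in> (\<lambda>((c,fs),(c',gs)). ((Inl c, map Inl fs), (Inl c', map Inl gs))) ` Eqs C
           \<union> UEqs Q
           \<union> (\<lambda>((c,fs),(c',gs)). ((Inr c, map (Inr \<circ> Inr) fs), (Inr c', map (Inr \<circ> Inr) gs))) ` Eqs D"
      by (simp add: total_def)
    then show "c = c' \<and> (\<exists>d. path_ok (total C D Q) c fs d \<and> path_ok (total C D Q) c gs d)"
      unfolding Un_iff mem_image_split by (auto dest!: E1 E2 E3)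
  qed
  show ?thesis using F E unfolding wf_catp_def by blast
qed

section \<open>Normalisation of cross paths (generic)\<close>

lemma iapp_pact_Nil [simp]: "iapp (pact P []) t = t"
  by (simp add: pact_Nil_fun)

lemma pact_ok:
  assumes "wfc0 C D P" "wf_catp C" "path_ok C c fs c'" "x \<in> Gens (Inst P c')"
  shows "term_ok D (Inst P c) (pact P fs x) (gsort (Inst P c') x)"
  using pact_mor[OF assms(1-3)] assms(4) unfolding inst_mor_def by auto

lemma sem_ok:
  assumes "wfc0 C D P" "wf_catp C" "path_ok C c fs c1" "x \<in> Gens (Inst P c1)"
    "path_ok D (gsort (Inst P c1) x) g d"
  shows "term_ok D (Inst P c) (iapp (pact P fs) (x, g)) d"
  using assms by (intro iapp_term_ok[OF pact_mor[OF assms(1-3)]]) (auto simp: term_ok_def)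

lemma norm_gen:
  assumes wfC: "wf_catp C" and wfP: "wfc0 C D P"
    and phi: "\<forall>c\<in>Sorts C. \<forall>x\<in>Gens (Inst P c). \<phi> c x \<in> UFuns Q \<and> usrc Q (\<phi> c x) = c \<and>
                   utgt Q (\<phi> c x) = gsort (Inst P c) x"
    and act: "\<forall>f\<in>Funs C. \<forall>p\<in>Gens (Inst P (ctgt C f)).
       peq (total C D Q) (Inl (csrc C f), [Inl f, Inr (Inl (\<phi> (ctgt C f) p))])
         (xp (csrc C f) [] (\<phi> (csrc C f) (fst (Act P f p))) (snd (Act P f p)))"
  shows "path_ok C c fs c1 \<Longrightarrow> x \<in> Gens (Inst P c1) \<Longrightarrow> path_ok D (gsort (Inst P c1) x) g d \<Longrightarrow>
    peq (total C D Q) (xp c fs (\<phi> c1 x) g)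
      (xp c [] (\<phi> c (fst (iapp (pact P fs) (x, g)))) (snd (iapp (pact P fs) (x, g))))"
proof (induction fs arbitrary: c)
  case Nil
  then have "c = c1" "c \<in> Sorts C" by auto
  then have "path_ok (total C D Q) (Inl c) (snd (xp c [] (\<phi> c1 x) g)) (Inr d)"
    using Nil phi \<open>c = c1\<close> \<open>c \<in> Sorts C\<close> by (intro path_xp[OF wfC, THEN iffD2]) auto
  then have "peq (total C D Q) (xp c [] (\<phi> c1 x) g) (xp c [] (\<phi> c1 x) g)"
    by (metis peq_refl prod.collapse fst_xp)
  then show ?case using \<open>c = c1\<close> by simp
next
  case (Cons f fs)
  let ?T = "total C D Q"
  let ?c' = "ctgt C f"
  from Cons.prems have f: "f \<in> Funs C" "csrc C f = c" "path_ok C ?c' fs c1" by auto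
  obtain y k where yk: "iapp (pact P fs) (x, g) = (y, k)" by (cases "iapp (pact P fs) (x, g)")
  have tok: "term_ok D (Inst P ?c') (y, k) d"
    using sem_ok[OF wfP wfC f(3) Cons.prems(2,3)] yk by simp
  then have y: "y \<in> Gens (Inst P ?c')" "path_ok D (gsort (Inst P ?c') y) k d"
    by (auto simp: term_ok_def)
  have c'S: "?c' \<in> Sorts C" using f(3) path_ok_src by metis
  have cS: "c \<in> Sorts C" using Cons.prems by auto
  have IH: "peq ?T (xp ?c' fs (\<phi> c1 x) g) (xp ?c' [] (\<phi> ?c' y) k)"
    using Cons.IH[OF f(3) Cons.prems(2,3)] yk by simp
  have 1: "peq ?T (xp c (f # fs) (\<phi> c1 x) g) (Inl c, [Inl f, Inr (Inl (\<phi> ?c' y))] @ map (Inr \<circ> Inr) k)"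
    using peq_left[OF IH[unfolded xp_def], of "Inl f"] f by (simp add: xp_def)
  obtain z h where zh: "Act P f y = (z, h)" by (cases "Act P f y")
  have 2: "peq ?T (Inl c, [Inl f, Inr (Inl (\<phi> ?c' y))]) (xp c [] (\<phi> c z) h)"
    using act f y zh by force
  have "gsort (Inst P ?c') y \<in> Sorts D" using y(2) path_ok_src by metis
  then have p2: "path_ok ?T (Inl c) [Inl f, Inr (Inl (\<phi> ?c' y))] (Inr (gsort (Inst P ?c') y))"
    using phi f y c'S cS by auto
  have p3: "path_ok ?T (Inr (gsort (Inst P ?c') y)) (map (Inr \<circ> Inr) k) (Inr d)"
    using y by (simp add: path_D)
  have 3: "peq ?T (Inl c, [Inl f, Inr (Inl (\<phi> ?c' y))] @ map (Inr \<circ> Inr) k) (xp c [] (\<phi> c z) (h @ k))"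
    using peq_suffix[OF 2[unfolded xp_def] p2 p3] by (simp add: xp_def)
  have e: "iapp (pact P (f # fs)) (x, g) = (z, h @ k)"
    using yk zh by (cases "pact P fs x") (auto simp: iapp_def)
  show ?case using peq_trans[OF 1 3] unfolding e by simp
qed

section \<open>Uncurrying: the main semantic facts\<close>

locale UC =
  fixes C :: "('c,'fc) catp" and D :: "('d,'fd) catp" and P :: "('c,'d,'fc,'fd,'g) currp"
  assumes wfC: "wf_catp C" and wfD: "wf_catp D" and wfP: "wf_currp C D P"
begin

abbreviation "UP \<equiv> uncurry C P"
abbreviation "TT \<equiv> total C D (uncurry C P)"

lemma UP_simps [simp]:
  "UFuns UP = Sigma (Sorts C) (\<lambda>c. Gens (Inst P c))"
  "usrc UP = fst"
  "utgt UP (c, x) = gsort (Inst P c) x"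
  by (simp_all add: uncurry_def)

lemma wfI: "c \<in> Sorts C \<Longrightarrow> wf_instp D (Inst P c)"
  using wfP by (simp add: wf_currp_def)

lemma wfP0: "wfc0 C D P" using wfP by (rule wfc0I)

lemma act_mor: "f \<in> Funs C \<Longrightarrow> inst_mor D (Inst P (ctgt C f)) (Inst P (csrc C f)) (Act P f)"
  using wfP by (simp add: wf_currp_def)

lemma act_ok: "f \<in> Funs C \<Longrightarrow> p \<in> Gens (Inst P (ctgt C f)) \<Longrightarrow>
    term_ok D (Inst P (csrc C f)) (Act P f p) (gsort (Inst P (ctgt C f)) p)"
  using act_mor unfolding inst_mor_def by auto

lemma ov_in_UEqs: "c \<in> Sorts C \<Longrightarrow> (t, t') \<in> IEqs (Inst P c) \<Longrightarrow> (ov c t, ov c t') \<in> UEqs UP"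
  unfolding uncurry_def ucp.simps by blast

lemma act_in_UEqs: "f \<in> Funs C \<Longrightarrow> p \<in> Gens (Inst P (ctgt C f)) \<Longrightarrow>
  ((Inl (csrc C f), [Inl f, Inr (Inl (ctgt C f, p))]), ov (csrc C f) (Act P f p)) \<in> UEqs UP"
  by (auto simp: uncurry_def)

lemma UEqs_cases:
  assumes "(s, t) \<in> UEqs UP"
  obtains (ov) c u v where "c \<in> Sorts C" "(u, v) \<in> IEqs (Inst P c)" "s = ov c u" "t = ov c v"
  | (act) f p where "f \<in> Funs C" "p \<in> Gens (Inst P (ctgt C f))"
     "s = (Inl (csrc C f), [Inl f, Inr (Inl (ctgt C f, p))])" "t = ov (csrc C f) (Act P f p)"
  using assms by (auto simp: uncurry_def)

lemma in_Eqs: "x \<in> UEqs UP \<Longrightarrow> x \<in> Eqs TT"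
  by (simp add: total_def)

lemma ov_path: "c \<in> Sorts C \<Longrightarrow> term_ok D (Inst P c) t d \<Longrightarrow> path_ok TT (Inl c) (snd (ov c t)) (Inr d)"
  unfolding ov_xp term_ok_def by (intro path_xp[OF wfC, THEN iffD2]) auto

lemma wf_UP: "wf_ucp C D UP"
  unfolding wf_ucp_def
proof (rule conjI; intro ballI)
  fix p assume "p \<in> UFuns UP"
  then show "usrc UP p \<in> Sorts C \<and> utgt UP p \<in> Sorts D"
    using wfI unfolding wf_instp_def by auto
next
  fix st assume "st \<in> UEqs UP"
  then obtain s t where st: "st = (s, t)" "(s, t) \<in> UEqs UP" by (cases st) auto
  from st(2) have "\<exists>c d. cross_path C D UP c d s \<and> cross_path C D UP c d t"
  proof (cases rule: UEqs_cases)
    case (ov c u v)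
    then obtain d where d: "term_ok D (Inst P c) u d" "term_ok D (Inst P c) v d"
      using wfI[OF ov(1)] unfolding wf_instp_def by blast
    have "cross_path C D UP c d s" "cross_path C D UP c d t"
      unfolding cross_path_def using ov_path[OF ov(1) d(1)] ov_path[OF ov(1) d(2)] ov(3,4)
      by (simp_all add: ov_def)
    then show ?thesis by blast
  next
    case (act f p)
    have tok: "term_ok D (Inst P (csrc C f)) (Act P f p) (gsort (Inst P (ctgt C f)) p)"
      using act act_ok by auto
    have cs: "csrc C f \<in> Sorts C" "ctgt C f \<in> Sorts C" using wfC act unfolding wf_catp_def by auto
    have "gsort (Inst P (ctgt C f)) p \<in> Sorts D" using wfI[OF cs(2)] act(2) unfolding wf_instp_def by auto
    then have "path_ok TT (Inl (csrc C f)) [Inl f, Inr (Inl (ctgt C f, p))] (Inr (gsort (Inst P (ctgt C f)) p))"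
      using act cs by auto
    then have "cross_path C D UP (csrc C f) (gsort (Inst P (ctgt C f)) p) s"
       "cross_path C D UP (csrc C f) (gsort (Inst P (ctgt C f)) p) t"
      unfolding cross_path_def using ov_path[OF cs(1) tok] act(3,4) by (simp_all add: ov_def)
    then show ?thesis by blast
  qed
  then show "case st of (s, t) \<Rightarrow> \<exists>c d. cross_path C D UP c d s \<and> cross_path C D UP c d t"
    using st by simp
qed

lemma wf_TT: "wf_catp TT"
  by (rule wf_total[OF wfC wfD wf_UP])

lemma sound: assumes cS: "c \<in> Sorts C" shows "ieq D (Inst P c) u v \<Longrightarrow> peq TT (ov c u) (ov c v)"
proof (induction rule: ieq.induct)
  case (ieq_refl t d)
  then show ?case using ov_path[OF cS] by (metis peq_refl ov_def fst_conv snd_conv prod.collapse)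
next
  case (ieq_eq t t')
  then show ?case using cS by (intro peq_eq in_Eqs ov_in_UEqs)
next
  case (ieq_sym t t') then show ?case by (simp add: peq_sym)
next
  case (ieq_trans t t' t'') then show ?case by (metis peq_trans)
next
  case (ieq_right x gs y hs f)
  have p: "path_ok TT (Inl c) (snd (ov c (x, gs))) (Inr (csrc D f))"
    using ieq_right ov_path[OF cS] by auto
  have "peq TT (Inl c, snd (ov c (x, gs))) (Inl c, snd (ov c (y, hs)))"
    using ieq_right by (simp add: ov_def)
  from peq_right[OF this, of "Inr (Inr f)"] p ieq_right
  show ?case by (simp add: ov_def)
next
  case (ieq_Deq x gs c0 g g')
  have p: "path_ok TT (Inl c) (snd (ov c (x, gs))) (Inr c0)"
    using ieq_Deq ov_path[OF cS] by auto
  have "((Inr c0, map (Inr \<circ> Inr) g), (Inr c0, map (Inr \<circ> Inr) g')) \<in> Eqs TT"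
    using ieq_Deq by (force simp: total_def)
  from peq_prefix[OF peq_eq[OF this] p]
  show ?case by (simp add: ov_def)
qed

lemma norm: "path_ok C c fs c1 \<Longrightarrow> x \<in> Gens (Inst P c1) \<Longrightarrow> path_ok D (gsort (Inst P c1) x) g d \<Longrightarrow>
    peq TT (xp c fs (c1, x) g) (ov c (iapp (pact P fs) (x, g)))"
  using norm_gen[OF wfC wfP0, of "\<lambda>c x. (c, x)" "uncurry C P"] unfolding ov_xp
  using wfI act_in_UEqs[THEN in_Eqs, THEN peq_eq]
  by (auto simp: ov_xp)


definition INV :: "('c + 'd) \<times> ('fc + ('c \<times> 'g) + 'fd) list \<Rightarrow> ('c + 'd) \<times> ('fc + ('c \<times> 'g) + 'fd) list \<Rightarrow> bool" where
  "INV s t \<longleftrightarrow>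
   (\<exists>c fs gs c'. s = (Inl c, map Inl fs) \<and> t = (Inl c, map Inl gs) \<and> path_ok C c fs c' \<and> path_ok C c gs c' \<and>
      (\<forall>x\<in>Gens (Inst P c'). ieq D (Inst P c) (pact P fs x) (pact P gs x)))
 \<or> (\<exists>c fs c1 x g gs c2 y h d. s = xp c fs (c1, x) g \<and> t = xp c gs (c2, y) h \<and>
      path_ok C c fs c1 \<and> x \<in> Gens (Inst P c1) \<and> path_ok D (gsort (Inst P c1) x) g d \<and>
      path_ok C c gs c2 \<and> y \<in> Gens (Inst P c2) \<and> path_ok D (gsort (Inst P c2) y) h d \<and>
      ieq D (Inst P c) (iapp (pact P fs) (x, g)) (iapp (pact P gs) (y, h)))
 \<or> (\<exists>d gs hs d'. s = (Inr d, map (Inr \<circ> Inr) gs) \<and> t = (Inr d, map (Inr \<circ> Inr) hs) \<and>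
      path_ok D d gs d' \<and> path_ok D d hs d' \<and>
      (\<forall>c\<in>Sorts C. \<forall>x k. term_ok D (Inst P c) (x, k) d \<longrightarrow> ieq D (Inst P c) (x, k @ gs) (x, k @ hs)))"

lemma INV_sym: "INV s t \<Longrightarrow> INV t s"
  unfolding INV_def
  apply (elim disjE exE conjE)
  subgoal by (rule disjI1, blast intro: ieq_sym)
  subgoal by (rule disjI2, rule disjI1, blast intro: ieq_sym)
  subgoal by (rule disjI2, rule disjI2, blast intro: ieq_sym)
  done


lemma map_Inl_inj [simp]: "map Inl xs = map Inl ys \<longleftrightarrow> xs = ys"
  by (simp add: inj_map_eq_map)

lemma xp_neq_C [simp]: "xp c fs p g \<noteq> (Inl c', map Inl gs)" "(Inl c', map Inl gs) \<noteq> xp c fs p g"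
  by (auto simp: xp_def dest: sym[THEN map_Inl_neq[THEN notE]] map_Inl_neq[THEN notE])

lemma xp_neq_D [simp]: "xp c fs p g \<noteq> (Inr d, xs)" "(Inr d, xs) \<noteq> xp c fs p g"
  by (auto simp: xp_def)

lemma INV_cases:
  assumes "INV s t"
  obtains (C) c fs gs c' where "s = (Inl c, map Inl fs)" "t = (Inl c, map Inl gs)" "path_ok C c fs c'" "path_ok C c gs c'"
      "\<forall>x\<in>Gens (Inst P c'). ieq D (Inst P c) (pact P fs x) (pact P gs x)"
  | (X) c fs c1 x g gs c2 y h d where "s = xp c fs (c1, x) g" "t = xp c gs (c2, y) h"
      "path_ok C c fs c1" "x \<in> Gens (Inst P c1)" "path_ok D (gsort (Inst P c1) x) g d"
      "path_ok C c gs c2" "y \<in> Gens (Inst P c2)" "path_ok D (gsort (Inst P c2) y) h d"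
      "ieq D (Inst P c) (iapp (pact P fs) (x, g)) (iapp (pact P gs) (y, h))"
  | (Dd) d gs hs d' where "s = (Inr d, map (Inr \<circ> Inr) gs)" "t = (Inr d, map (Inr \<circ> Inr) hs)"
      "path_ok D d gs d'" "path_ok D d hs d'"
      "\<forall>c\<in>Sorts C. \<forall>x k. term_ok D (Inst P c) (x, k) d \<longrightarrow> ieq D (Inst P c) (x, k @ gs) (x, k @ hs)"
  using assms unfolding INV_def by (elim disjE exE conjE) blast+

lemma INV_C: "path_ok C c fs c' \<Longrightarrow> path_ok C c gs c' \<Longrightarrow>
  (\<forall>x\<in>Gens (Inst P c'). ieq D (Inst P c) (pact P fs x) (pact P gs x)) \<Longrightarrow>
  INV (Inl c, map Inl fs) (Inl c, map Inl gs)"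
  unfolding INV_def by blast

lemma INV_X: "path_ok C c fs c1 \<Longrightarrow> x \<in> Gens (Inst P c1) \<Longrightarrow> path_ok D (gsort (Inst P c1) x) g d \<Longrightarrow>
      path_ok C c gs c2 \<Longrightarrow> y \<in> Gens (Inst P c2) \<Longrightarrow> path_ok D (gsort (Inst P c2) y) h d \<Longrightarrow>
      ieq D (Inst P c) (iapp (pact P fs) (x, g)) (iapp (pact P gs) (y, h)) \<Longrightarrow>
  INV (xp c fs (c1, x) g) (xp c gs (c2, y) h)"
  unfolding INV_def by blast

lemma INV_D: "path_ok D d gs d' \<Longrightarrow> path_ok D d hs d' \<Longrightarrow>
      (\<forall>c\<in>Sorts C. \<forall>x k. term_ok D (Inst P c) (x, k) d \<longrightarrow> ieq D (Inst P c) (x, k @ gs) (x, k @ hs)) \<Longrightarrow>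
   INV (Inr d, map (Inr \<circ> Inr) gs) (Inr d, map (Inr \<circ> Inr) hs)"
  unfolding INV_def by blast

lemma INV_trans:
  assumes st: "INV s t" and tu: "INV t u" shows "INV s u"
  using st
proof (cases rule: INV_cases)
  case (C c fs gs c')
  note o = C
  from tu show ?thesis
  proof (cases rule: INV_cases)
    case (C c0 fs0 gs0 c0')
    then have "c0 = c" "fs0 = gs" "c0' = c'" using o(2,4) path_ok_det by auto
    then show ?thesis using C o
      by (auto intro!: INV_C intro: ieq_trans)
  qed (use o in auto)
next
  case (X c fs c1 x g gs c2 y h d)
  note o = X
  from tu show ?thesis
  proof (cases rule: INV_cases)
    case (X c0 fs0 c01 x0 g0 gs0 c02 y0 h0 d0)
    then have "c0 = c" "fs0 = gs" "c01 = c2" "x0 = y" "g0 = h" "d0 = d"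
      using o(2,8) path_ok_det by auto
    then show ?thesis using X o
      by (auto intro!: INV_X intro: ieq_trans)
  qed (use o in auto)
next
  case (Dd d gs hs d')
  note o = Dd
  from tu show ?thesis
  proof (cases rule: INV_cases)
    case (Dd d0 gs0 hs0 d0')
    then have "d0 = d" "gs0 = hs" "d0' = d'" using o(2,4) path_ok_det by auto
    then show ?thesis using Dd o
      by (auto intro!: INV_D) (meson ieq_trans)
  qed (use o in auto)
qed


lemma gsort_D: "c \<in> Sorts C \<Longrightarrow> x \<in> Gens (Inst P c) \<Longrightarrow> gsort (Inst P c) x \<in> Sorts D"
  using wfI unfolding wf_instp_def by auto

lemma INV_refl: "path_ok TT a xs e \<Longrightarrow> INV (a, xs) (a, xs)"
proof (cases a)
  case (Inl c)
  assume pa: "path_ok TT a xs e"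
  from path_any_C[OF pa[unfolded Inl]] show ?thesis
  proof (elim disjE exE conjE)
    fix fs c' assume h: "xs = map Inl fs" "e = Inl c'" "path_ok C c fs c'"
    show ?thesis unfolding Inl h(1)
      by (rule INV_C[OF h(3) h(3)]) (auto intro: ieq_refl pact_ok[OF wfP0 wfC h(3)])
  next
    fix fs p g d assume h: "xs = map Inl fs @ Inr (Inl p) # map (Inr \<circ> Inr) g"
      "path_ok C c fs (usrc UP p)" "p \<in> UFuns UP" "path_ok D (utgt UP p) g d" "e = Inr d"
    obtain c1 x where p: "p = (c1, x)" by (cases p)
    have e: "(a, xs) = xp c fs (c1, x) g" using Inl h(1) p by (simp add: xp_def)
    have h2: "path_ok C c fs c1" "x \<in> Gens (Inst P c1)" "path_ok D (gsort (Inst P c1) x) g d"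
      using h p by auto
    show ?thesis unfolding e
      by (rule INV_X[OF h2 h2]) (rule ieq_refl[OF sem_ok[OF wfP0 wfC h2]])
  qed
next
  case (Inr d)
  assume pa: "path_ok TT a xs e"
  from path_D_any[OF pa[unfolded Inr]] obtain g d' where h: "xs = map (Inr \<circ> Inr) g" "e = Inr d'" "path_ok D d g d'"
    by blast
  show ?thesis unfolding Inr h(1)
    by (rule INV_D[OF h(3) h(3)]) (auto intro: ieq_refl term_ok_app[OF _ h(3)])
qed

lemma INV_eq: assumes "(s, t) \<in> Eqs TT" shows "INV s t"
proof -
  obtain a xs b ys where st: "s = (a, xs)" "t = (b, ys)" by (cases s, cases t)
  have "((a, xs), (b, ys)) \<in> (\<lambda>((c,fs),(c',gs)). ((Inl c, map Inl fs), (Inl c', map Inl gs))) ` Eqs C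
           \<union> UEqs UP
           \<union> (\<lambda>((c,fs),(c',gs)). ((Inr c, map (Inr \<circ> Inr) fs), (Inr c', map (Inr \<circ> Inr) gs))) ` Eqs D"
    using assms st by (simp add: total_def)
  then consider (C) c fs c' gs where "((c, fs), (c', gs)) \<in> Eqs C" "a = Inl c" "xs = map Inl fs" "b = Inl c'" "ys = map Inl gs"
    | (U) "(s, t) \<in> UEqs UP"
    | (Dd) d g d' g' where "((d, g), (d', g')) \<in> Eqs D" "a = Inr d" "xs = map (Inr \<circ> Inr) g" "b = Inr d'" "ys = map (Inr \<circ> Inr) g'"
    unfolding Un_iff mem_image_split using st by blast
  then show ?thesis
  proof cases
    case C
    then obtain e where e: "c = c'" "path_ok C c fs e" "path_ok C c gs e"
      using wfC unfolding wf_catp_def by fastforce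
    have "inst_meq D (Inst P (ptgt C (c, fs))) (Inst P c) (pact P fs) (pact P gs)"
      using wfP C(1) unfolding wf_currp_def by fastforce
    then have "\<forall>x\<in>Gens (Inst P e). ieq D (Inst P c) (pact P fs x) (pact P gs x)"
      using ptgt_path[OF e(2)] unfolding inst_meq_def by simp
    then show ?thesis using st C e by (auto intro: INV_C)
  next
    case U
    then show ?thesis
    proof (cases rule: UEqs_cases)
      case (ov c u v)
      then obtain d where d: "term_ok D (Inst P c) u d" "term_ok D (Inst P c) v d"
        using wfI[OF ov(1)] unfolding wf_instp_def by blast
      have "ieq D (Inst P c) u v" using ov(2) by (rule ieq_eq)
      then show ?thesis unfolding ov ov_xp using ov(1) d
        by (intro INV_X[where d=d]) (auto simp: term_ok_def)
    next
      case (act f p)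
      have cs: "csrc C f \<in> Sorts C" "ctgt C f \<in> Sorts C" using wfC act unfolding wf_catp_def by auto
      have tok: "term_ok D (Inst P (csrc C f)) (Act P f p) (gsort (Inst P (ctgt C f)) p)"
        using act act_ok by auto
      have e1: "s = xp (csrc C f) [f] (ctgt C f, p) []" using act by (simp add: xp_def)
      have e2: "iapp (pact P [f]) (p, []) = Act P f p" by simp
      show ?thesis unfolding e1 act(4) ov_xp
        apply (rule INV_X[where d="gsort (Inst P (ctgt C f)) p"])
        using act cs tok gsort_D[OF cs(2) act(2)] by (auto simp: term_ok_def intro: ieq_refl)
    qed
  next
    case Dd
    then obtain e where e: "d = d'" "path_ok D d g e" "path_ok D d g' e"
      using wfD unfolding wf_catp_def by fastforce
    show ?thesis unfolding st Dd e(1)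
      by (rule INV_D[OF e(2,3)[unfolded e(1)]]) (use Dd e in \<open>auto intro: ieq_Deq\<close>)
  qed
qed


lemma Funs_TT_cases:
  assumes "F \<in> Funs TT"
  obtains (L) f where "F = Inl f" "f \<in> Funs C"
  | (P) c x where "F = Inr (Inl (c, x))" "c \<in> Sorts C" "x \<in> Gens (Inst P c)"
  | (R) g where "F = Inr (Inr g)" "g \<in> Funs D"
  using assms by auto

lemma pact_Cons_iapp: "iapp (pact P (f # fs)) t = iapp (Act P f) (iapp (pact P fs) t)"
  by (simp add: iapp_def)

lemma INV_left:
  assumes inv: "INV (a, xs) (a, ys)" and F: "F \<in> Funs TT" and tg: "ctgt TT F = a"
  shows "INV (csrc TT F, F # xs) (csrc TT F, F # ys)"
  using F
proof (cases rule: Funs_TT_cases)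
  case (L f)
  have cs: "csrc C f \<in> Sorts C" using wfC L unfolding wf_catp_def by auto
  from inv show ?thesis
  proof (cases rule: INV_cases)
    case (C c fs gs c')
    then have "c = ctgt C f" using tg L by simp
    have "INV (Inl (csrc C f), map Inl (f # fs)) (Inl (csrc C f), map Inl (f # gs))"
      using C L cs \<open>c = ctgt C f\<close> by (intro INV_C[where c'=c']) (auto intro!: ieq_mor[OF act_mor])
    then show ?thesis using C L by simp
  next
    case (X c fs c1 x g gs c2 y h d)
    then have c: "c = ctgt C f" using tg L by (simp add: xp_def)
    have e: "(csrc TT F, F # xs) = xp (csrc C f) (f # fs) (c1, x) g"
            "(csrc TT F, F # ys) = xp (csrc C f) (f # gs) (c2, y) h"
      using X L by (simp_all add: xp_def)
    show ?thesis unfolding e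
      using X L cs c by (intro INV_X[where d=d]) (auto simp only: pact_Cons_iapp intro!: ieq_mor[OF act_mor] path_ok.simps(2)[THEN iffD2])
  next
    case (Dd d gs hs d')
    then show ?thesis using tg L by simp
  qed
next
  case (P c x)
  from inv show ?thesis
  proof (cases rule: INV_cases)
    case (Dd d gs hs d')
    then have d: "d = gsort (Inst P c) x" using tg P by simp
    have e: "(csrc TT F, F # xs) = xp c [] (c, x) gs" "(csrc TT F, F # ys) = xp c [] (c, x) hs"
      using Dd P by (simp_all add: xp_def)
    have "term_ok D (Inst P c) (x, []) d" using P d gsort_D by (simp add: term_ok_def)
    then have "ieq D (Inst P c) (x, gs) (x, hs)" using Dd P by force
    then show ?thesis unfolding e using Dd P d by (intro INV_X[where d=d']) auto
  qed (use tg P in \<open>auto simp: xp_def\<close>)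
next
  case (R g0)
  have cs: "csrc D g0 \<in> Sorts D" using wfD R unfolding wf_catp_def by auto
  from inv show ?thesis
  proof (cases rule: INV_cases)
    case (Dd d gs hs d')
    then have d: "d = ctgt D g0" using tg R by simp
    have e: "(csrc TT F, F # xs) = (Inr (csrc D g0), map (Inr \<circ> Inr) (g0 # gs))"
            "(csrc TT F, F # ys) = (Inr (csrc D g0), map (Inr \<circ> Inr) (g0 # hs))"
      using Dd R by simp_all
    show ?thesis unfolding e
    proof (rule INV_D)
      show "path_ok D (csrc D g0) (g0 # gs) d'" "path_ok D (csrc D g0) (g0 # hs) d'" using Dd R d cs by auto
      show "\<forall>c\<in>Sorts C. \<forall>x k. term_ok D (Inst P c) (x, k) (csrc D g0) \<longrightarrow>
            ieq D (Inst P c) (x, k @ g0 # gs) (x, k @ g0 # hs)"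
      proof (intro ballI allI impI)
        fix c x k assume "c \<in> Sorts C" "term_ok D (Inst P c) (x, k) (csrc D g0)"
        then have "term_ok D (Inst P c) (x, k @ [g0]) d" using R d
          by (intro term_ok_app) (auto dest: path_ok_src[of D "ctgt D g0" "[]"] simp: wfD[unfolded wf_catp_def])
        then show "ieq D (Inst P c) (x, k @ g0 # gs) (x, k @ g0 # hs)"
          using Dd \<open>c \<in> Sorts C\<close> by force
      qed
    qed
  qed (use tg R in \<open>auto simp: xp_def\<close>)
qed


lemma INV_right:
  assumes inv: "INV (a, xs) (b, ys)" and F: "F \<in> Funs TT" and pa: "path_ok TT a xs (csrc TT F)"
  shows "INV (a, xs @ [F]) (b, ys @ [F])"
  using inv
proof (cases rule: INV_cases)
  case (C c fs gs c')
  have "path_ok TT (Inl c) (map Inl fs) (Inl c')" using C by (simp add: path_C)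
  then have src: "csrc TT F = Inl c'" using pa C path_ok_det by auto
  from F show ?thesis
  proof (cases rule: Funs_TT_cases)
    case (L f)
    have cf: "csrc C f = c'" using src L by simp
    have cs: "ctgt C f \<in> Sorts C" "csrc C f \<in> Sorts C" using wfC L unfolding wf_catp_def by auto
    have "INV (Inl c, map Inl (fs @ [f])) (Inl c, map Inl (gs @ [f]))"
    proof (rule INV_C[where c'="ctgt C f"])
      show "path_ok C c (fs @ [f]) (ctgt C f)" "path_ok C c (gs @ [f]) (ctgt C f)"
        using C L cf cs by (auto simp: path_ok_append)
      have meq: "inst_meq D (Inst P c') (Inst P c) (pact P fs) (pact P gs)"
        using C unfolding inst_meq_def by auto
      have mor: "inst_mor D (Inst P c') (Inst P c) (pact P fs)" by (rule pact_mor[OF wfP0 wfC C(3)])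
      show "\<forall>x\<in>Gens (Inst P (ctgt C f)). ieq D (Inst P c) (pact P (fs @ [f]) x) (pact P (gs @ [f]) x)"
      proof
        fix x assume x: "x \<in> Gens (Inst P (ctgt C f))"
        have "term_ok D (Inst P c') (Act P f x) (gsort (Inst P (ctgt C f)) x)"
          using act_ok[OF L(2)] x cf by simp
        from ieq_meq[OF meq mor this] show "ieq D (Inst P c) (pact P (fs @ [f]) x) (pact P (gs @ [f]) x)"
          by (simp add: pact_append)
      qed
    qed
    then show ?thesis using C L by simp
  next
    case (P c1 x)
    have c1: "c1 = c'" using src P by simp
    have e: "(a, xs @ [F]) = xp c fs (c1, x) []" "(b, ys @ [F]) = xp c gs (c1, x) []"
      using C P by (simp_all add: xp_def)
    show ?thesis unfolding e using C P c1 gsort_D[OF P(2,3)]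
      by (intro INV_X[where d="gsort (Inst P c1) x"]) auto
  next
    case (R g0)
    then show ?thesis using src by simp
  qed
next
  case (X c fs c1 x g gs c2 y h d)
  have "path_ok TT (Inl c) (snd (xp c fs (c1, x) g)) (Inr d)"
    using X path_ok_tgt[OF wfC X(3)] by (intro path_xp[OF wfC, THEN iffD2]) auto
  then have src: "csrc TT F = Inr d" using pa X path_ok_det by (metis fst_xp snd_conv fst_conv)
  from F show ?thesis
  proof (cases rule: Funs_TT_cases)
    case (R g0)
    have cf: "csrc D g0 = d" using src R by simp
    have cs: "ctgt D g0 \<in> Sorts D" "csrc D g0 \<in> Sorts D" using wfD R unfolding wf_catp_def by auto
    have e: "(a, xs @ [F]) = xp c fs (c1, x) (g @ [g0])" "(b, ys @ [F]) = xp c gs (c2, y) (h @ [g0])"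
      using X R by (auto simp: xp_def)
    have tok: "term_ok D (Inst P c) (iapp (pact P fs) (x, g)) d" by (rule sem_ok[OF wfP0 wfC X(3,4,5)])
    have "ieq D (Inst P c) (fst (iapp (pact P fs) (x, g)), snd (iapp (pact P fs) (x, g)) @ [g0])
                           (fst (iapp (pact P gs) (y, h)), snd (iapp (pact P gs) (y, h)) @ [g0])"
      using X(9) tok R cf by (intro ieq_right[where x="fst _" and gs="snd _", simplified]) auto
    then have "ieq D (Inst P c) (iapp (pact P fs) (x, g @ [g0])) (iapp (pact P gs) (y, h @ [g0]))"
      by (simp add: iapp_def)
    then show ?thesis unfolding e using X R cf cs
      by (intro INV_X[where d="ctgt D g0"]) (auto simp: path_ok_append)
  qed (use src in auto)
next
  case (Dd d gs hs d')
  have "path_ok TT (Inr d) (map (Inr \<circ> Inr) gs) (Inr d')" using Dd by (simp add: path_D)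
  then have src: "csrc TT F = Inr d'" using pa Dd path_ok_det by auto
  from F show ?thesis
  proof (cases rule: Funs_TT_cases)
    case (R g0)
    have cf: "csrc D g0 = d'" using src R by simp
    have cs: "ctgt D g0 \<in> Sorts D" "csrc D g0 \<in> Sorts D" using wfD R unfolding wf_catp_def by auto
    have "INV (Inr d, map (Inr \<circ> Inr) (gs @ [g0])) (Inr d, map (Inr \<circ> Inr) (hs @ [g0]))"
    proof (rule INV_D)
      show "path_ok D d (gs @ [g0]) (ctgt D g0)" "path_ok D d (hs @ [g0]) (ctgt D g0)"
        using Dd R cf cs by (auto simp: path_ok_append)
      show "\<forall>c\<in>Sorts C. \<forall>x k. term_ok D (Inst P c) (x, k) d \<longrightarrow>
            ieq D (Inst P c) (x, k @ gs @ [g0]) (x, k @ hs @ [g0])"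
      proof (intro ballI allI impI)
        fix c x k assume c: "c \<in> Sorts C" and t: "term_ok D (Inst P c) (x, k) d"
        have "ieq D (Inst P c) (x, k @ gs) (x, k @ hs)" using Dd c t by blast
        moreover have "term_ok D (Inst P c) (x, k @ gs) (csrc D g0)" using t Dd cf by (intro term_ok_app) auto
        ultimately have "ieq D (Inst P c) (x, (k @ gs) @ [g0]) (x, (k @ hs) @ [g0])"
          using R by (intro ieq_right) auto
        then show "ieq D (Inst P c) (x, k @ gs @ [g0]) (x, k @ hs @ [g0])" by simp
      qed
    qed
    then show ?thesis using Dd R by simp
  qed (use src in auto)
qed

lemma peq_INV: "peq TT s t \<Longrightarrow> INV s t"
proof (induction rule: peq.induct)
  case (peq_refl c fs d) then show ?case by (rule INV_refl)
next
  case (peq_eq p q) then show ?case by (rule INV_eq)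
next
  case (peq_sym p q) from peq_sym.IH show ?case by (rule INV_sym)
next
  case (peq_trans p q r) then show ?case by (metis INV_trans)
next
  case (peq_left c fs gs f) then show ?case by (intro INV_left) auto
next
  case (peq_right c fs c' gs f) then show ?case by (intro INV_right) auto
qed

lemma complete: "peq TT (ov c u) (ov c v) \<Longrightarrow> ieq D (Inst P c) u v"
proof -
  assume "peq TT (ov c u) (ov c v)"
  then have "INV (ov c u) (ov c v)" by (rule peq_INV)
  then show ?thesis
  proof (cases rule: INV_cases)
    case (X c0 fs c1 x g gs c2 y h d)
    then have "fs = []" "gs = []" "x = fst u" "g = snd u" "y = fst v" "h = snd v" "c0 = c"
      by (auto simp: ov_xp)
    then show ?thesis using X(9) by simp
  qed (auto simp: ov_xp)
qed


lemma at_UP_mor: "c \<in> Sorts C \<Longrightarrow> inst_mor D (Inst P c) (ucp_at UP c) (\<lambda>x. ((c, x), []))"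
  unfolding inst_mor_def
proof (intro conjI ballI)
  fix x assume "c \<in> Sorts C" "x \<in> Gens (Inst P c)"
  then show "term_ok D (ucp_at UP c) ((c, x), []) (gsort (Inst P c) x)"
    using gsort_D by (simp add: term_ok_def ucp_at_def)
next
  fix tt assume c: "c \<in> Sorts C" and tt: "tt \<in> IEqs (Inst P c)"
  obtain t t' where tt': "tt = (t, t')" by (cases tt)
  have "(ov c t, ov c t') \<in> UEqs UP" using ov_in_UEqs[OF c] tt tt' by simp
  then have "(((c, fst t), snd t), ((c, fst t'), snd t')) \<in> IEqs (ucp_at UP c)"
    by (simp add: ucp_at_def rcp_def ov_def)
  then show "case tt of (t, t') \<Rightarrow> ieq D (ucp_at UP c) (iapp (\<lambda>x. ((c, x), [])) t) (iapp (\<lambda>x. ((c, x), [])) t')"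
    using tt' by (auto simp: iapp_def intro: ieq_eq)
qed

lemma curryable_UP: "curryable C D UP"
  unfolding curryable_def
proof
  show "nongenerative C D UP"
    unfolding nongenerative_def
  proof (intro ballI impI)
    fix f p assume f: "f \<in> Funs C" and p: "p \<in> UFuns UP" and tg: "ctgt C f = usrc UP p"
    obtain c x where px: "p = (c, x)" by (cases p)
    then have c: "c = ctgt C f" "x \<in> Gens (Inst P (ctgt C f))" using p tg by auto
    have cs: "csrc C f \<in> Sorts C" using wfC f unfolding wf_catp_def by auto
    have tok: "term_ok D (Inst P (csrc C f)) (Act P f x) (gsort (Inst P (ctgt C f)) x)"
      using act_ok[OF f c(2)] .
    have "right_cross D UP (ov (csrc C f) (Act P f x))"
      unfolding right_cross_def using tok cs
      by (intro exI[of _ "(csrc C f, fst (Act P f x))"] exI[of _ "snd (Act P f x)"])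
         (auto simp: term_ok_def rcp_def ov_def)
    moreover have "peq TT (Inl (csrc C f), [Inl f, Inr (Inl p)]) (ov (csrc C f) (Act P f x))"
      using px c act_in_UEqs[OF f c(2), THEN in_Eqs, THEN peq_eq] by simp
    ultimately show "\<exists>x. right_cross D UP x \<and> peq TT (Inl (csrc C f), [Inl f, Inr (Inl p)]) x" by blast
  qed
next
  show "conservative C D UP"
    unfolding conservative_def
  proof (intro allI impI, elim conjE)
    fix c p g d p' g' d'
    assume h: "p \<in> UFuns UP" "p' \<in> UFuns UP" "usrc UP p = c" "usrc UP p' = c"
      "peq TT (rcp UP p g) (rcp UP p' g')"
    obtain x y where xy: "p = (c, x)" "p' = (c, y)" using h by (cases p, cases p') auto
    have c: "c \<in> Sorts C" using h xy by auto
    have "rcp UP p g = ov c (x, g)" "rcp UP p' g' = ov c (y, g')" using xy by (simp_all add: rcp_def ov_def)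
    then have "ieq D (Inst P c) (x, g) (y, g')" using h(5) complete by simp
    from ieq_mor[OF at_UP_mor[OF c] this]
    show "ieq D (ucp_at UP c) (p, g) (p', g')" using xy by (simp add: iapp_def)
  qed
qed

end

lemma uext_C [simp]: "uext G (a, map Inl fs) = (a, map Inl fs)"
  by (induction fs) (auto simp: uext_def)

lemma uext_D [simp]: "uext G (a, map (Inr \<circ> Inr) g) = (a, map (Inr \<circ> Inr) g)"
  by (induction g) (auto simp: uext_def)

lemma uext_app: "uext G (a, xs @ ys) = (a, snd (uext G (a, xs)) @ snd (uext G (a, ys)))"
  by (simp add: uext_def)

lemma uext_xp: "uext G (xp c fs p g) = (Inl c, map Inl fs @ snd (G p) @ map (Inr \<circ> Inr) g)"
proof -
  have "uext G (xp c fs p g) = (Inl c, snd (uext G (Inl c, map Inl fs)) @ snd (uext G (Inl c, [Inr (Inl p)])) @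
      snd (uext G (Inl c, map (Inr \<circ> Inr) g)))"
    unfolding xp_def by (simp add: uext_def)
  also have "\<dots> = (Inl c, map Inl fs @ snd (G p) @ map (Inr \<circ> Inr) g)"
    by (simp only: uext_C uext_D snd_conv) (simp add: uext_def)
  finally show ?thesis .
qed

lemma uext_ov: "uext (uncurry_mor F) (ov c t) = ov c (iapp (F c) t)"
  unfolding ov_xp uext_xp by (simp add: uncurry_mor_def ov_def iapp_def xp_def)

lemma Ceq_in: "((c, fs), (c', gs)) \<in> Eqs C \<Longrightarrow> ((Inl c, map Inl fs), (Inl c', map Inl gs)) \<in> Eqs (total C D Q)"
  by (force simp: total_def)

lemma Deq_in: "((c, fs), (c', gs)) \<in> Eqs D \<Longrightarrow>
   ((Inr c, map (Inr \<circ> Inr) fs), (Inr c', map (Inr \<circ> Inr) gs)) \<in> Eqs (total C D Q)"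
  by (force simp: total_def)

lemma ucp_mor_eqs:
  assumes "\<forall>(s, t)\<in>UEqs P. peq (total C D Q) (uext F s) (uext F t)"
  shows "\<forall>(s, t)\<in>Eqs (total C D P). peq (total C D Q) (uext F s) (uext F t)"
proof (clarify)
  fix a xs b ys assume "((a, xs), (b, ys)) \<in> Eqs (total C D P)"
  then have "((a, xs), (b, ys)) \<in> (\<lambda>((c,fs),(c',gs)). ((Inl c, map Inl fs), (Inl c', map Inl gs))) ` Eqs C
           \<union> UEqs P
           \<union> (\<lambda>((c,fs),(c',gs)). ((Inr c, map (Inr \<circ> Inr) fs), (Inr c', map (Inr \<circ> Inr) gs))) ` Eqs D"
    by (simp add: total_def)
  then show "peq (total C D Q) (uext F (a, xs)) (uext F (b, ys))"
    unfolding Un_iff mem_image_split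
  proof (elim disjE exE conjE)
    assume "((a, xs), b, ys) \<in> UEqs P" then show ?thesis using assms by auto
  next
    fix c fs c' gs assume "((c, fs), c', gs) \<in> Eqs C" "a = Inl c" "xs = map Inl fs" "b = Inl c'" "ys = map Inl gs"
    then show ?thesis by (simp only: uext_C) (intro peq_eq Ceq_in)
  next
    fix c fs c' gs assume "((c, fs), c', gs) \<in> Eqs D" "a = Inr c" "xs = map (Inr \<circ> Inr) fs" "b = Inr c'" "ys = map (Inr \<circ> Inr) gs"
    then show ?thesis by (simp only: uext_D) (intro peq_eq Deq_in)
  qed
qed


context UC begin

lemma id_meq: "ucp_meq C D UP UP (uncurry_mor curr_id) (ucp_id UP)"
  unfolding ucp_meq_def
proof
  fix p assume p: "p \<in> UFuns UP"
  obtain c x where px: "p = (c, x)" by (cases p)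
  have c: "c \<in> Sorts C" "x \<in> Gens (Inst P c)" using p px by auto
  have "term_ok D (Inst P c) (x, []) (gsort (Inst P c) x)" using c gsort_D by (simp add: term_ok_def)
  from ov_path[OF c(1) this] have "path_ok TT (Inl c) (snd (ov c (x, []))) (Inr (gsort (Inst P c) x))" .
  then have "peq TT (ov c (x, [])) (ov c (x, []))" by (metis peq_refl ov_def fst_conv prod.collapse)
  then show "peq TT (uncurry_mor curr_id p) (ucp_id UP p)"
    using px by (simp add: uncurry_mor_def curr_id_def ucp_id_def ov_def)
qed

lemma ov_refl: "c \<in> Sorts C \<Longrightarrow> term_ok D (Inst P c) t d \<Longrightarrow> peq TT (ov c t) (ov c t)"
  using ov_path by (metis peq_refl ov_def fst_conv prod.collapse)

lemma act_uext:
  assumes f: "f \<in> Funs C" and u: "term_ok D (Inst P (ctgt C f)) u d" and K: "K (ctgt C f, p) = ov (ctgt C f) u"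
  shows "peq TT (uext K (Inl (csrc C f), [Inl f, Inr (Inl (ctgt C f, p))])) (ov (csrc C f) (iapp (Act P f) u))"
proof -
  have e: "uext K (Inl (csrc C f), [Inl f, Inr (Inl (ctgt C f, p))]) = xp (csrc C f) [f] (ctgt C f, fst u) (snd u)"
    using K by (simp add: uext_def xp_def ov_def)
  have cs: "csrc C f \<in> Sorts C" "ctgt C f \<in> Sorts C" using wfC f unfolding wf_catp_def by auto
  have "peq TT (xp (csrc C f) [f] (ctgt C f, fst u) (snd u)) (ov (csrc C f) (iapp (pact P [f]) (fst u, snd u)))"
    using u f cs by (intro norm) (auto simp: term_ok_def)
  then show ?thesis unfolding e by (simp add: pact_Cons_iapp)
qed

end

locale UC2 = p: UC C D P + q: UC C D Q
  for C :: "('c,'fc) catp" and D :: "('d,'fd) catp" and P :: "('c,'d,'fc,'fd,'g) currp"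
    and Q :: "('c,'d,'fc,'fd,'h) currp"
begin

lemma mor_F:
  assumes F: "curr_mor C D P Q F"
  shows "ucp_mor C D p.UP q.UP (uncurry_mor F) \<and> rightward D p.UP q.UP (uncurry_mor F)"
proof -
  have Fm: "\<And>c. c \<in> Sorts C \<Longrightarrow> inst_mor D (Inst P c) (Inst Q c) (F c)" using F by (simp add: curr_mor_def)
  have Fn: "\<And>f. f \<in> Funs C \<Longrightarrow> inst_meq D (Inst P (ctgt C f)) (Inst Q (csrc C f))
         (icomp (F (csrc C f)) (Act P f)) (icomp (Act Q f) (F (ctgt C f)))" using F by (simp add: curr_mor_def)
  have tok: "\<And>c x. c \<in> Sorts C \<Longrightarrow> x \<in> Gens (Inst P c) \<Longrightarrow> term_ok D (Inst Q c) (F c x) (gsort (Inst P c) x)"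
    using Fm unfolding inst_mor_def by auto
  have part1: "\<forall>p\<in>UFuns p.UP. cross_path C D q.UP (usrc p.UP p) (utgt p.UP p) (uncurry_mor F p)"
  proof
    fix p assume p: "p \<in> UFuns p.UP"
    obtain c x where px: "p = (c, x)" by (cases p)
    have c: "c \<in> Sorts C" "x \<in> Gens (Inst P c)" using p px by auto
    show "cross_path C D q.UP (usrc p.UP p) (utgt p.UP p) (uncurry_mor F p)"
      using q.ov_path[OF c(1) tok[OF c]] px by (simp add: cross_path_def uncurry_mor_def ov_def)
  qed
  have part2: "\<forall>(s, t)\<in>UEqs p.UP. peq q.TT (uext (uncurry_mor F) s) (uext (uncurry_mor F) t)"
  proof (clarify)
    fix s t assume "(s, t) \<in> UEqs p.UP"
    then show "peq q.TT (uext (uncurry_mor F) s) (uext (uncurry_mor F) t)"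
    proof (cases rule: p.UEqs_cases)
      case (ov c u v)
      have "ieq D (Inst Q c) (iapp (F c) u) (iapp (F c) v)"
        using Fm[OF ov(1)] ov(2) unfolding inst_mor_def by auto
      then show ?thesis using ov by (simp add: uext_ov q.sound)
    next
      case (act f p)
      have cs: "csrc C f \<in> Sorts C" "ctgt C f \<in> Sorts C" using p.wfC act unfolding wf_catp_def by auto
      have 1: "peq q.TT (uext (uncurry_mor F) s) (ov (csrc C f) (iapp (Act Q f) (F (ctgt C f) p)))"
        unfolding act(3)
        by (rule q.act_uext[OF act(1) tok[OF cs(2) act(2)]]) (simp add: uncurry_mor_def)
      have "ieq D (Inst Q (csrc C f)) (iapp (F (csrc C f)) (Act P f p)) (iapp (Act Q f) (F (ctgt C f) p))"
        using Fn[OF act(1)] act(2) unfolding inst_meq_def icomp_def by auto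
      then have 2: "peq q.TT (uext (uncurry_mor F) t) (ov (csrc C f) (iapp (Act Q f) (F (ctgt C f) p)))"
        unfolding act(4) uext_ov using cs by (intro q.sound)
      show ?thesis using peq_trans[OF 1 peq_sym[OF 2]] .
    qed
  qed
  have "ucp_mor C D p.UP q.UP (uncurry_mor F)"
    unfolding ucp_mor_def using part1 ucp_mor_eqs[OF part2] by blast
  moreover have "rightward D p.UP q.UP (uncurry_mor F)"
    unfolding rightward_def
  proof
    fix p assume p: "p \<in> UFuns p.UP"
    obtain c x where px: "p = (c, x)" by (cases p)
    have c: "c \<in> Sorts C" "x \<in> Gens (Inst P c)" using p px by auto
    show "right_cross D q.UP (uncurry_mor F p)"
      unfolding right_cross_def using tok[OF c] px c
      by (intro exI[of _ "(c, fst (F c x))"] exI[of _ "snd (F c x)"] exI[of _ "gsort (Inst P c) x"])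
         (auto simp: term_ok_def uncurry_mor_def ov_def rcp_def)
  qed
  ultimately show ?thesis ..
qed

lemma faithful:
  assumes F: "curr_mor C D P Q F" and G: "curr_mor C D P Q G"
  shows "curr_meq C D P Q F G \<longleftrightarrow> ucp_meq C D p.UP q.UP (uncurry_mor F) (uncurry_mor G)"
proof
  assume "curr_meq C D P Q F G"
  then show "ucp_meq C D p.UP q.UP (uncurry_mor F) (uncurry_mor G)"
    unfolding curr_meq_def inst_meq_def ucp_meq_def
    by (auto simp: uncurry_mor_def intro: q.sound)
next
  assume "ucp_meq C D p.UP q.UP (uncurry_mor F) (uncurry_mor G)"
  then show "curr_meq C D P Q F G"
    unfolding curr_meq_def inst_meq_def ucp_meq_def
    by (auto simp: uncurry_mor_def intro: q.complete)
qed


lemma full: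
  assumes H: "ucp_mor C D p.UP q.UP H" and R: "rightward D p.UP q.UP H"
  shows "\<exists>F. curr_mor C D P Q F \<and> ucp_meq C D p.UP q.UP (uncurry_mor F) H"
proof -
  have Hform: "\<exists>t. H (c, x) = ov c t \<and> term_ok D (Inst Q c) t (gsort (Inst P c) x)"
    if c: "c \<in> Sorts C" "x \<in> Gens (Inst P c)" for c x
  proof -
    have cp: "cross_path C D q.UP c (gsort (Inst P c) x) (H (c, x))"
      using H c unfolding ucp_mor_def by auto
    from R c obtain q g d where q: "q \<in> UFuns q.UP" "path_ok D (utgt q.UP q) g d" "H (c, x) = rcp q.UP q g"
      unfolding rightward_def right_cross_def by force
    obtain c' y where qy: "q = (c', y)" by (cases q)
    have "c' = c" using cp q qy by (simp add: cross_path_def rcp_def)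
    then have e: "H (c, x) = ov c (y, g)" using q qy by (simp add: rcp_def ov_def)
    have tk: "term_ok D (Inst Q c) (y, g) d" using q qy \<open>c' = c\<close> by (simp add: term_ok_def)
    have "path_ok q.TT (Inl c) (Inr (Inl (c, y)) # map (Inr \<circ> Inr) g) (Inr d)"
      using q.ov_path[OF c(1) tk] by (simp add: ov_def)
    moreover have "path_ok q.TT (Inl c) (Inr (Inl (c, y)) # map (Inr \<circ> Inr) g) (Inr (gsort (Inst P c) x))"
      using cp e by (simp add: cross_path_def ov_def)
    ultimately have "d = gsort (Inst P c) x" using path_ok_det by fastforce
    then show ?thesis using e tk by blast
  qed
  define F where "F c x = (SOME t. H (c, x) = ov c t \<and> term_ok D (Inst Q c) t (gsort (Inst P c) x))" for c x
  have Fp: "H (c, x) = ov c (F c x)" "term_ok D (Inst Q c) (F c x) (gsort (Inst P c) x)"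
    if "c \<in> Sorts C" "x \<in> Gens (Inst P c)" for c x
    using someI_ex[OF Hform[OF that]] unfolding F_def by blast+
  have uH: "uext H (ov c t) = ov c (iapp (F c) t)" if "c \<in> Sorts C" "fst t \<in> Gens (Inst P c)" for c t
    using Fp[OF that] by (simp add: ov_xp uext_xp) (simp add: ov_def xp_def iapp_def)
  have Heq: "peq q.TT (uext H s) (uext H t)" if "(s, t) \<in> UEqs p.UP" for s t
  proof -
    have "\<forall>(s, t)\<in>Eqs p.TT. peq q.TT (uext H s) (uext H t)" using H unfolding ucp_mor_def by blast
    from bspec[OF this p.in_Eqs[OF that]] show ?thesis by simp
  qed
  have mor: "inst_mor D (Inst P c) (Inst Q c) (F c)" if c: "c \<in> Sorts C" for c
    unfolding inst_mor_def
  proof (intro conjI ballI)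
    fix x assume "x \<in> Gens (Inst P c)"
    then show "term_ok D (Inst Q c) (F c x) (gsort (Inst P c) x)" using Fp c by blast
  next
    fix tt assume tt: "tt \<in> IEqs (Inst P c)"
    obtain t t' where tt': "tt = (t, t')" by (cases tt)
    obtain d where d: "term_ok D (Inst P c) t d" "term_ok D (Inst P c) t' d"
      using p.wfI[OF c] tt tt' unfolding wf_instp_def by blast
    have "peq q.TT (uext H (ov c t)) (uext H (ov c t'))"
      using Heq p.ov_in_UEqs[OF c] tt tt' by auto
    then have "peq q.TT (ov c (iapp (F c) t)) (ov c (iapp (F c) t'))"
      using uH c d by (simp add: term_ok_def)
    then show "case tt of (t, t') \<Rightarrow> ieq D (Inst Q c) (iapp (F c) t) (iapp (F c) t')"
      using tt' q.complete by simp
  qed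
  have nat: "inst_meq D (Inst P (ctgt C f)) (Inst Q (csrc C f))
         (icomp (F (csrc C f)) (Act P f)) (icomp (Act Q f) (F (ctgt C f)))" if f: "f \<in> Funs C" for f
    unfolding inst_meq_def icomp_def
  proof
    fix p assume p: "p \<in> Gens (Inst P (ctgt C f))"
    have cs: "csrc C f \<in> Sorts C" "ctgt C f \<in> Sorts C" using p.wfC f unfolding wf_catp_def by auto
    have 1: "peq q.TT (uext H (Inl (csrc C f), [Inl f, Inr (Inl (ctgt C f, p))]))
               (ov (csrc C f) (iapp (Act Q f) (F (ctgt C f) p)))"
      by (rule q.act_uext[where K=H and p=p, OF f Fp(2)[OF cs(2) p] Fp(1)[OF cs(2) p]])
    have ak: "term_ok D (Inst P (csrc C f)) (Act P f p) (gsort (Inst P (ctgt C f)) p)"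
      using p.act_ok[OF f p] .
    have 2: "peq q.TT (uext H (Inl (csrc C f), [Inl f, Inr (Inl (ctgt C f, p))]))
               (ov (csrc C f) (iapp (F (csrc C f)) (Act P f p)))"
      using Heq[OF p.act_in_UEqs[OF f p]] uH[OF cs(1)] ak by (simp add: term_ok_def)
    show "ieq D (Inst Q (csrc C f)) (iapp (F (csrc C f)) (Act P f p)) (iapp (Act Q f) (F (ctgt C f) p))"
      by (rule q.complete) (rule peq_trans[OF peq_sym[OF 2] 1])
  qed
  have "curr_mor C D P Q F" unfolding curr_mor_def using mor nat by blast
  moreover have "ucp_meq C D p.UP q.UP (uncurry_mor F) H"
    unfolding ucp_meq_def
  proof
    fix p assume p: "p \<in> UFuns p.UP"
    obtain c x where px: "p = (c, x)" by (cases p)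
    have c: "c \<in> Sorts C" "x \<in> Gens (Inst P c)" using p px by auto
    show "peq q.TT (uncurry_mor F p) (H p)"
      using q.ov_refl[OF c(1) Fp(2)[OF c]] Fp(1)[OF c] px by (simp add: uncurry_mor_def)
  qed
  ultimately show ?thesis by blast
qed

end


section \<open>Currying a curryable presentation\<close>

definition curryP :: "('c,'fc) catp \<Rightarrow> ('d,'fd) catp \<Rightarrow> ('c,'d,'fc,'fd,'q) ucp \<Rightarrow> ('c,'d,'fc,'fd,'q) currp" where
  "curryP C D Q = \<lparr> Inst = ucp_at Q,
     Act = (\<lambda>f p. SOME t. fst t \<in> UFuns Q \<and> usrc Q (fst t) = csrc C f \<and>
        path_ok D (utgt Q (fst t)) (snd t) (utgt Q p) \<and>
        peq (total C D Q) (Inl (csrc C f), [Inl f, Inr (Inl p)]) (rcp Q (fst t) (snd t))) \<rparr>"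

locale CQ =
  fixes C :: "('c,'fc) catp" and D :: "('d,'fd) catp" and Q :: "('c,'d,'fc,'fd,'q) ucp"
  assumes wfC: "wf_catp C" and wfD: "wf_catp D" and wfQ: "wf_ucp C D Q" and cur: "curryable C D Q"
begin

abbreviation "T \<equiv> total C D Q"
abbreviation "PP \<equiv> curryP C D Q"

lemma wfT: "wf_catp T" by (rule wf_total[OF wfC wfD wfQ])

lemma Q_sorts: "p \<in> UFuns Q \<Longrightarrow> usrc Q p \<in> Sorts C \<and> utgt Q p \<in> Sorts D"
  using wfQ unfolding wf_ucp_def by auto

lemma PP_simps [simp]: "Inst PP c = ucp_at Q c"
  by (simp add: curryP_def)

lemma at_simps [simp]: "Gens (ucp_at Q c) = {p \<in> UFuns Q. usrc Q p = c}" "gsort (ucp_at Q c) = utgt Q"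
  by (simp_all add: ucp_at_def)

lemma rcp_path: "p \<in> UFuns Q \<Longrightarrow> path_ok D (utgt Q p) g d \<Longrightarrow> path_ok T (Inl (usrc Q p)) (snd (rcp Q p g)) (Inr d)"
  unfolding rcp_xp using Q_sorts by (intro path_xp[OF wfC, THEN iffD2]) auto

lemma short_rcp:
  assumes f: "f \<in> Funs C" and p: "p \<in> UFuns Q" "usrc Q p = ctgt C f"
    and q: "q \<in> UFuns Q" "path_ok D (utgt Q q) g d"
    and e: "peq T (Inl (csrc C f), [Inl f, Inr (Inl p)]) (rcp Q q g)"
  shows "usrc Q q = csrc C f \<and> d = utgt Q p"
proof -
  from peq_typed[OF wfT e] have "Inl (csrc C f) = fst (rcp Q q g) \<and>
    (\<exists>e'. path_ok T (Inl (csrc C f)) [Inl f, Inr (Inl p)] e' \<and> path_ok T (fst (rcp Q q g)) (snd (rcp Q q g)) e')"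
    unfolding fst_conv snd_conv .
  then obtain e' where h: "Inl (csrc C f) = fst (rcp Q q g)"
    "path_ok T (Inl (csrc C f)) [Inl f, Inr (Inl p)] e'" "path_ok T (fst (rcp Q q g)) (snd (rcp Q q g)) e'"
    by blast
  have 1: "usrc Q q = csrc C f" using h(1) by (simp add: rcp_def)
  have "e' = Inr (utgt Q p)" using h(2) p by auto
  moreover have "path_ok T (fst (rcp Q q g)) (snd (rcp Q q g)) (Inr d)"
    using rcp_path[OF q] by (simp add: rcp_def)
  ultimately have "d = utgt Q p" using h(3) path_ok_det by fastforce
  with 1 show ?thesis by simp
qed

lemma Act_spec:
  assumes f: "f \<in> Funs C" and p: "p \<in> UFuns Q" "usrc Q p = ctgt C f"
  shows "fst (Act PP f p) \<in> UFuns Q \<and> usrc Q (fst (Act PP f p)) = csrc C f \<and>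
        path_ok D (utgt Q (fst (Act PP f p))) (snd (Act PP f p)) (utgt Q p) \<and>
        peq T (Inl (csrc C f), [Inl f, Inr (Inl p)]) (rcp Q (fst (Act PP f p)) (snd (Act PP f p)))"
proof -
  obtain x where x: "right_cross D Q x" "peq T (Inl (csrc C f), [Inl f, Inr (Inl p)]) x"
    using cur f p unfolding curryable_def nongenerative_def by metis
  then obtain q g d where q: "q \<in> UFuns Q" "path_ok D (utgt Q q) g d" "x = rcp Q q g"
    unfolding right_cross_def by blast
  have "usrc Q q = csrc C f \<and> d = utgt Q p" using short_rcp[OF f p q(1,2)] x q by simp
  then have "\<exists>t. fst t \<in> UFuns Q \<and> usrc Q (fst t) = csrc C f \<and>
        path_ok D (utgt Q (fst t)) (snd t) (utgt Q p) \<and>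
        peq T (Inl (csrc C f), [Inl f, Inr (Inl p)]) (rcp Q (fst t) (snd t))"
    using q x by (intro exI[of _ "(q, g)"]) auto
  from someI_ex[OF this] show ?thesis by (simp add: curryP_def)
qed

lemma wf_at: "c \<in> Sorts C \<Longrightarrow> wf_instp D (ucp_at Q c)"
  unfolding wf_instp_def
proof (intro conjI ballI)
  fix x assume "x \<in> Gens (ucp_at Q c)"
  then show "gsort (ucp_at Q c) x \<in> Sorts D" using Q_sorts by auto
next
  fix tt assume tt: "tt \<in> IEqs (ucp_at Q c)"
  obtain p g p' g' where e: "tt = ((p, g), (p', g'))" by (cases tt) auto
  have m: "(rcp Q p g, rcp Q p' g') \<in> UEqs Q" "usrc Q p = c" "usrc Q p' = c"
    using tt e by (auto simp: ucp_at_def)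
  then obtain c0 d where cp: "cross_path C D Q c0 d (rcp Q p g)" "cross_path C D Q c0 d (rcp Q p' g')"
    using wfQ unfolding wf_ucp_def by blast
  have "p \<in> UFuns Q \<and> path_ok D (utgt Q p) g d" "p' \<in> UFuns Q \<and> path_ok D (utgt Q p') g' d"
    using cp unfolding cross_path_def rcp_xp by (auto simp: path_xp[OF wfC])
  then show "case tt of (t, t') \<Rightarrow> \<exists>d. term_ok D (ucp_at Q c) t d \<and> term_ok D (ucp_at Q c) t' d"
    using e m by (auto simp: term_ok_def)
qed

lemma rcp_in: "(rcp Q p g, rcp Q p' g') \<in> UEqs Q \<Longrightarrow> peq T (rcp Q p g) (rcp Q p' g')"
  by (intro peq_eq) (simp add: total_def)

lemma conserv:
  assumes "p \<in> UFuns Q" "p' \<in> UFuns Q" "usrc Q p = c" "usrc Q p' = c"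
    "path_ok D (utgt Q p) g d" "path_ok D (utgt Q p') g' d'" "peq T (rcp Q p g) (rcp Q p' g')"
  shows "ieq D (ucp_at Q c) (p, g) (p', g')"
  using cur assms unfolding curryable_def conservative_def by blast

lemma act_mor_PP: "f \<in> Funs C \<Longrightarrow> inst_mor D (ucp_at Q (ctgt C f)) (ucp_at Q (csrc C f)) (Act PP f)"
  unfolding inst_mor_def
proof (intro conjI ballI)
  fix p assume f: "f \<in> Funs C" and p: "p \<in> Gens (ucp_at Q (ctgt C f))"
  then show "term_ok D (ucp_at Q (csrc C f)) (Act PP f p) (gsort (ucp_at Q (ctgt C f)) p)"
    using Act_spec[OF f] by (auto simp: term_ok_def)
next
  fix tt assume f: "f \<in> Funs C" and tt: "tt \<in> IEqs (ucp_at Q (ctgt C f))"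
  obtain p g p' g' where e: "tt = ((p, g), (p', g'))" by (cases tt) auto
  have m: "(rcp Q p g, rcp Q p' g') \<in> UEqs Q" "usrc Q p = ctgt C f" "usrc Q p' = ctgt C f"
    using tt e by (auto simp: ucp_at_def)
  have cs: "csrc C f \<in> Sorts C" "ctgt C f \<in> Sorts C" using wfC f unfolding wf_catp_def by auto
  obtain d where d: "term_ok D (ucp_at Q (ctgt C f)) (p, g) d" "term_ok D (ucp_at Q (ctgt C f)) (p', g') d"
    using wf_at[OF cs(2)] tt e unfolding wf_instp_def by fastforce
  then have pp: "p \<in> UFuns Q" "p' \<in> UFuns Q" "path_ok D (utgt Q p) g d" "path_ok D (utgt Q p') g' d"
    by (auto simp: term_ok_def)
  obtain q h where qh: "Act PP f p = (q, h)" by (cases "Act PP f p")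
  obtain q' h' where qh': "Act PP f p' = (q', h')" by (cases "Act PP f p'")
  have A1: "q \<in> UFuns Q" "usrc Q q = csrc C f" "path_ok D (utgt Q q) h (utgt Q p)"
      "peq T (Inl (csrc C f), [Inl f, Inr (Inl p)]) (rcp Q q h)"
    using Act_spec[OF f pp(1) m(2)] qh by auto
  have A2: "q' \<in> UFuns Q" "usrc Q q' = csrc C f" "path_ok D (utgt Q q') h' (utgt Q p')"
      "peq T (Inl (csrc C f), [Inl f, Inr (Inl p')]) (rcp Q q' h')"
    using Act_spec[OF f pp(2) m(3)] qh' by auto
  have pf: "path_ok T (Inl (csrc C f)) [Inl f] (Inl (ctgt C f))" using f cs by auto
  have "peq T (rcp Q p g) (rcp Q p' g')" by (rule rcp_in[OF m(1)])
  then have "peq T (Inl (ctgt C f), snd (rcp Q p g)) (Inl (ctgt C f), snd (rcp Q p' g'))"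
    using m by (simp add: rcp_def)
  from peq_prefix[OF this pf]
  have 1: "peq T (Inl (csrc C f), [Inl f, Inr (Inl p)] @ map (Inr \<circ> Inr) g)
                 (Inl (csrc C f), [Inl f, Inr (Inl p')] @ map (Inr \<circ> Inr) g')"
    by (simp add: rcp_def)
  have "utgt Q p \<in> Sorts D" "utgt Q p' \<in> Sorts D" using Q_sorts pp by auto
  then have pa: "path_ok T (Inl (csrc C f)) [Inl f, Inr (Inl p)] (Inr (utgt Q p))"
     "path_ok T (Inl (csrc C f)) [Inl f, Inr (Inl p')] (Inr (utgt Q p'))"
    using f cs pp m by auto
  have 2: "peq T (Inl (csrc C f), [Inl f, Inr (Inl p)] @ map (Inr \<circ> Inr) g) (rcp Q q (h @ g))"
    using peq_suffix[OF A1(4)[unfolded rcp_def] pa(1), of "map (Inr \<circ> Inr) g" "Inr d"] pp by (simp add: path_D rcp_def)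
  have 3: "peq T (Inl (csrc C f), [Inl f, Inr (Inl p')] @ map (Inr \<circ> Inr) g') (rcp Q q' (h' @ g'))"
    using peq_suffix[OF A2(4)[unfolded rcp_def] pa(2), of "map (Inr \<circ> Inr) g'" "Inr d"] pp by (simp add: path_D rcp_def)
  have "peq T (rcp Q q (h @ g)) (rcp Q q' (h' @ g'))"
    using peq_trans[OF peq_trans[OF peq_sym[OF 2] 1] 3] .
  then have "ieq D (ucp_at Q (csrc C f)) (q, h @ g) (q', h' @ g')"
    using A1 A2 pp by (intro conserv[where d=d and d'=d]) (auto simp: path_ok_append)
  then show "case tt of (t, t') \<Rightarrow> ieq D (ucp_at Q (csrc C f)) (iapp (Act PP f) t) (iapp (Act PP f) t')"
    using e qh qh' by (simp add: iapp_def)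
qed

lemma wfc0_PP: "wfc0 C D PP"
  unfolding wfc0_def using wf_at act_mor_PP by simp


lemma normQ:
  assumes "path_ok C c fs c1" "p \<in> UFuns Q" "usrc Q p = c1" "path_ok D (utgt Q p) g d"
  shows "peq T (xp c fs p g) (rcp Q (fst (iapp (pact PP fs) (p, g))) (snd (iapp (pact PP fs) (p, g))))
     \<and> term_ok D (ucp_at Q c) (iapp (pact PP fs) (p, g)) d"
proof -
  have tk: "term_ok D (ucp_at Q c) (iapp (pact PP fs) (p, g)) d"
    using sem_ok[OF wfc0_PP wfC assms(1), of p g d] assms by simp
  have "peq T (xp c fs ((\<lambda>c x. x) c1 p) g)
      (xp c [] ((\<lambda>c x. x) c (fst (iapp (pact PP fs) (p, g)))) (snd (iapp (pact PP fs) (p, g))))"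
  proof (rule norm_gen[OF wfC wfc0_PP])
    show "\<forall>c\<in>Sorts C. \<forall>x\<in>Gens (Inst PP c). x \<in> UFuns Q \<and> usrc Q x = c \<and> utgt Q x = gsort (Inst PP c) x"
      by simp
    show "\<forall>f\<in>Funs C. \<forall>p\<in>Gens (Inst PP (ctgt C f)).
       peq T (Inl (csrc C f), [Inl f, Inr (Inl p)]) (xp (csrc C f) [] (fst (Act PP f p)) (snd (Act PP f p)))"
    proof (intro ballI)
      fix f p assume "f \<in> Funs C" "p \<in> Gens (Inst PP (ctgt C f))"
      then have "usrc Q (fst (Act PP f p)) = csrc C f \<and> peq T (Inl (csrc C f), [Inl f, Inr (Inl p)]) (rcp Q (fst (Act PP f p)) (snd (Act PP f p)))"
        using Act_spec by auto
      then show "peq T (Inl (csrc C f), [Inl f, Inr (Inl p)]) (xp (csrc C f) [] (fst (Act PP f p)) (snd (Act PP f p)))"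
        by (metis rcp_xp)
    qed
  qed (use assms in auto)
  then show ?thesis using tk by (simp add: rcp_xp term_ok_def)
qed

lemma wf_PP: "wf_currp C D PP"
  unfolding wf_currp_def
proof (intro conjI)
  show "\<forall>c\<in>Sorts C. wf_instp D (Inst PP c)" using wf_at by simp
  show "\<forall>f\<in>Funs C. inst_mor D (Inst PP (ctgt C f)) (Inst PP (csrc C f)) (Act PP f)" using act_mor_PP by simp
  show "\<forall>(p, p')\<in>Eqs C. inst_meq D (Inst PP (ptgt C p)) (Inst PP (fst p)) (pact PP (snd p)) (pact PP (snd p'))"
  proof (clarify)
    fix c fs c' gs assume E: "((c, fs), (c', gs)) \<in> Eqs C"
    then obtain e where e: "c = c'" "path_ok C c fs e" "path_ok C c gs e"
      using wfC unfolding wf_catp_def by fastforce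
    show "inst_meq D (Inst PP (ptgt C (c, fs))) (Inst PP (fst (c, fs))) (pact PP (snd (c, fs))) (pact PP (snd (c', gs)))"
      unfolding inst_meq_def ptgt_path[OF e(2)]
    proof
      fix x assume x: "x \<in> Gens (Inst PP e)"
      then have xq: "x \<in> UFuns Q" "usrc Q x = e" by auto
      have ut: "utgt Q x \<in> Sorts D" using Q_sorts xq by auto
      have n1: "peq T (xp c fs x []) (rcp Q (fst (pact PP fs x)) (snd (pact PP fs x)))"
          "term_ok D (ucp_at Q c) (pact PP fs x) (utgt Q x)"
        using normQ[OF e(2) xq, of "[]" "utgt Q x"] ut by auto
      have n2: "peq T (xp c gs x []) (rcp Q (fst (pact PP gs x)) (snd (pact PP gs x)))"
          "term_ok D (ucp_at Q c) (pact PP gs x) (utgt Q x)"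
        using normQ[OF e(3) xq, of "[]" "utgt Q x"] ut by auto
      have "peq T (Inl c, map Inl fs) (Inl c, map Inl gs)" using E e by (intro peq_eq Ceq_in) simp
      moreover have "path_ok T (Inl c) (map Inl fs) (Inl e)" using e by (simp add: path_C)
      moreover have "path_ok T (Inl e) [Inr (Inl x)] (Inr (utgt Q x))" using xq ut Q_sorts by auto
      ultimately have "peq T (Inl c, map Inl fs @ [Inr (Inl x)]) (Inl c, map Inl gs @ [Inr (Inl x)])"
        by (rule peq_suffix)
      then have mid: "peq T (xp c fs x []) (xp c gs x [])" by (simp add: xp_def)
      have "peq T (rcp Q (fst (pact PP fs x)) (snd (pact PP fs x))) (rcp Q (fst (pact PP gs x)) (snd (pact PP gs x)))"
        using peq_trans[OF peq_trans[OF peq_sym[OF n1(1)] mid] n2(1)] .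
      then have "ieq D (ucp_at Q c) (fst (pact PP fs x), snd (pact PP fs x)) (fst (pact PP gs x), snd (pact PP gs x))"
        using n1(2) n2(2) by (intro conserv[where d="utgt Q x" and d'="utgt Q x"]) (auto simp: term_ok_def)
      then show "ieq D (Inst PP (fst (c, fs))) (pact PP (snd (c, fs)) x) (pact PP (snd (c', gs)) x)" by simp
    qed
  qed
qed

lemma UC_PP: "UC C D PP"
  by unfold_locales (rule wfC, rule wfD, rule wf_PP)

end

sublocale CQ \<subseteq> u: UC C D "curryP C D Q" by (rule UC_PP)

context CQ begin

lemma uUP_simps [simp]: "UFuns u.UP = Sigma (Sorts C) (\<lambda>c. {p \<in> UFuns Q. usrc Q p = c})"
  "utgt u.UP (c, p) = utgt Q p"
  by simp_all

lemma cross_xp: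
  assumes "cross_path C D Q c d s"
  shows "\<exists>fs q g. s = xp c fs q g \<and> path_ok C c fs (usrc Q q) \<and> q \<in> UFuns Q \<and> path_ok D (utgt Q q) g d"
proof -
  obtain xs where s: "s = (Inl c, xs)" "path_ok T (Inl c) xs (Inr d)"
    using assms unfolding cross_path_def by (cases s) auto
  from path_any_C[OF s(2)] show ?thesis
    using s(1) by (auto simp: xp_def)
qed

lemma keyB:
  assumes s: "path_ok C c fs (usrc Q q)" "q \<in> UFuns Q" "path_ok D (utgt Q q) g d"
    and t: "path_ok C c fs' (usrc Q q')" "q' \<in> UFuns Q" "path_ok D (utgt Q q') g' d"
    and e: "peq T (xp c fs q g) (xp c fs' q' g')"
  shows "ieq D (ucp_at Q c) (iapp (pact PP fs) (q, g)) (iapp (pact PP fs') (q', g'))"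
proof -
  note n1 = normQ[OF s(1,2) refl s(3)]
  note n2 = normQ[OF t(1,2) refl t(3)]
  have "peq T (rcp Q (fst (iapp (pact PP fs) (q, g))) (snd (iapp (pact PP fs) (q, g))))
              (rcp Q (fst (iapp (pact PP fs') (q', g'))) (snd (iapp (pact PP fs') (q', g'))))"
    using peq_trans[OF peq_trans[OF peq_sym[OF conjunct1[OF n1]] e] conjunct1[OF n2]] .
  then have "ieq D (ucp_at Q c) (fst (iapp (pact PP fs) (q, g)), snd (iapp (pact PP fs) (q, g)))
                                  (fst (iapp (pact PP fs') (q', g')), snd (iapp (pact PP fs') (q', g')))"
    using n1 n2 by (intro conserv[where d=d and d'=d]) (auto simp: term_ok_def)
  then show ?thesis by simp
qed

definition "AA = (\<lambda>x. ucp_id Q (snd x))"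
definition "BB = (\<lambda>p. ucp_id u.UP (usrc Q p, p))"

lemma ess:
  "ucp_mor C D u.UP Q AA \<and> rightward D u.UP Q AA \<and>
   ucp_mor C D Q u.UP BB \<and> rightward D Q u.UP BB \<and>
   ucp_meq C D u.UP u.UP (ucp_comp BB AA) (ucp_id u.UP) \<and>
   ucp_meq C D Q Q (ucp_comp AA BB) (ucp_id Q)"
proof (intro conjI)
  have AAe: "AA (c, p) = rcp Q p []" if "usrc Q p = c" for c p
    using that by (simp add: AA_def ucp_id_def rcp_def)
  have BBe: "BB p = ov (usrc Q p) (p, [])" for p
    by (simp add: BB_def ucp_id_def ov_def)
  have tk0: "term_ok D (ucp_at Q (usrc Q p)) (p, []) (utgt Q p)" if "p \<in> UFuns Q" for p
    using that Q_sorts by (simp add: term_ok_def)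
  show "ucp_mor C D u.UP Q AA"
    unfolding ucp_mor_def
  proof (intro conjI)
    show "\<forall>p\<in>UFuns u.UP. cross_path C D Q (usrc u.UP p) (utgt u.UP p) (AA p)"
    proof
      fix x assume "x \<in> UFuns u.UP"
      then obtain c p where x: "x = (c, p)" "p \<in> UFuns Q" "usrc Q p = c" by auto
      show "cross_path C D Q (usrc u.UP x) (utgt u.UP x) (AA x)"
        using rcp_path[OF x(2), of "[]" "utgt Q p"] Q_sorts[OF x(2)] x AAe[OF x(3)]
        by (simp add: cross_path_def rcp_def)
    qed
    show "\<forall>(s, t)\<in>Eqs (total C D u.UP). peq T (uext AA s) (uext AA t)"
    proof (rule ucp_mor_eqs, clarify)
      fix s t assume "(s, t) \<in> UEqs u.UP"
      then show "peq T (uext AA s) (uext AA t)"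
      proof (cases rule: u.UEqs_cases)
        case (ov c uu vv)
        obtain p g p' g' where uv: "uu = (p, g)" "vv = (p', g')" by (cases uu, cases vv)
        have m: "(rcp Q p g, rcp Q p' g') \<in> UEqs Q" "usrc Q p = c" "usrc Q p' = c"
          using ov(2) uv by (auto simp: ucp_at_def)
        have "uext AA s = rcp Q p g" "uext AA t = rcp Q p' g'"
          unfolding ov(3,4) uv ov_xp uext_xp using m by (simp_all add: AA_def ucp_id_def rcp_def xp_def)
        then show ?thesis using rcp_in[OF m(1)] by simp
      next
        case (act f p)
        have p: "p \<in> UFuns Q" "usrc Q p = ctgt C f" using act by auto
        note A = Act_spec[OF act(1) p]
        have "uext AA s = (Inl (csrc C f), [Inl f, Inr (Inl p)])"
          using act by (simp add: uext_def AA_def ucp_id_def)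
        moreover have "uext AA t = rcp Q (fst (Act (curryP C D Q) f p)) (snd (Act (curryP C D Q) f p))"
          unfolding act(4) ov_xp uext_xp using A by (simp add: AA_def ucp_id_def rcp_def xp_def)
        ultimately show ?thesis using A by simp
      qed
    qed
  qed
  show "rightward D u.UP Q AA"
    unfolding rightward_def right_cross_def
  proof
    fix x assume "x \<in> UFuns u.UP"
    then obtain c p where x: "x = (c, p)" "p \<in> UFuns Q" "usrc Q p = c" by auto
    show "\<exists>p g d. p \<in> UFuns Q \<and> path_ok D (utgt Q p) g d \<and> AA x = rcp Q p g"
      using x AAe[OF x(3)] Q_sorts[OF x(2)] by (intro exI[of _ p] exI[of _ "[]"] exI[of _ "utgt Q p"]) auto
  qed
  show "ucp_mor C D Q u.UP BB"
    unfolding ucp_mor_def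
  proof (intro conjI)
    show "\<forall>p\<in>UFuns Q. cross_path C D u.UP (usrc Q p) (utgt Q p) (BB p)"
    proof
      fix p assume p: "p \<in> UFuns Q"
      have "usrc Q p \<in> Sorts C" using Q_sorts[OF p] by simp
      from u.ov_path[OF this, of "(p, [])" "utgt Q p"] tk0[OF p]
      show "cross_path C D u.UP (usrc Q p) (utgt Q p) (BB p)"
        by (simp add: cross_path_def BBe ov_def)
    qed
    show "\<forall>(s, t)\<in>Eqs (total C D Q). peq u.TT (uext BB s) (uext BB t)"
    proof (rule ucp_mor_eqs, clarify)
      fix s t assume st: "(s, t) \<in> UEqs Q"
      then obtain c d where cp: "cross_path C D Q c d s" "cross_path C D Q c d t"
        using wfQ unfolding wf_ucp_def by blast
      obtain fs q g where S: "s = xp c fs q g" "path_ok C c fs (usrc Q q)" "q \<in> UFuns Q" "path_ok D (utgt Q q) g d"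
        using cross_xp[OF cp(1)] by blast
      obtain fs' q' g' where S': "t = xp c fs' q' g'" "path_ok C c fs' (usrc Q q')" "q' \<in> UFuns Q" "path_ok D (utgt Q q') g' d"
        using cross_xp[OF cp(2)] by blast
      have "peq T s t" by (rule peq_eq) (simp add: total_def st)
      then have I: "ieq D (ucp_at Q c) (iapp (pact PP fs) (q, g)) (iapp (pact PP fs') (q', g'))"
        using keyB[OF S(2-4) S'(2-4)] S S' by simp
      have cS: "c \<in> Sorts C" using S(2) path_ok_src by metis
      have u1: "uext BB s = xp c fs (usrc Q q, q) g" "uext BB t = xp c fs' (usrc Q q', q') g'"
        unfolding S(1) S'(1) uext_xp by (simp_all add: BB_def ucp_id_def xp_def)
      have n1: "peq u.TT (xp c fs (usrc Q q, q) g) (ov c (iapp (pact PP fs) (q, g)))"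
        using S by (intro u.norm) auto
      have n2: "peq u.TT (xp c fs' (usrc Q q', q') g') (ov c (iapp (pact PP fs') (q', g')))"
        using S' by (intro u.norm) auto
      have mid: "peq u.TT (ov c (iapp (pact PP fs) (q, g))) (ov c (iapp (pact PP fs') (q', g')))"
        using u.sound[OF cS] I by simp
      show "peq u.TT (uext BB s) (uext BB t)" unfolding u1 using peq_trans[OF peq_trans[OF n1 mid] peq_sym[OF n2]] .
    qed
  qed
  show "rightward D Q u.UP BB"
    unfolding rightward_def right_cross_def
  proof
    fix p assume p: "p \<in> UFuns Q"
    show "\<exists>pa g d. pa \<in> UFuns u.UP \<and> path_ok D (utgt u.UP pa) g d \<and> BB p = rcp u.UP pa g"
      using p Q_sorts[OF p] by (intro exI[of _ "(usrc Q p, p)"] exI[of _ "[]"] exI[of _ "utgt Q p"])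
        (auto simp: BB_def ucp_id_def rcp_def)
  qed
  show "ucp_meq C D u.UP u.UP (ucp_comp BB AA) (ucp_id u.UP)"
    unfolding ucp_meq_def
  proof
    fix x assume "x \<in> UFuns u.UP"
    then obtain c p where x: "x = (c, p)" "p \<in> UFuns Q" "usrc Q p = c" by auto
    have e: "ucp_comp BB AA x = ov c (p, [])" "ucp_id u.UP x = ov c (p, [])"
      using x by (simp_all add: ucp_comp_def uext_def BB_def AA_def ucp_id_def ov_def)
    show "peq u.TT (ucp_comp BB AA x) (ucp_id u.UP x)"
      unfolding e using Q_sorts[OF x(2)] x tk0[OF x(2)] by (intro u.ov_refl) auto
  qed
  show "ucp_meq C D Q Q (ucp_comp AA BB) (ucp_id Q)"
    unfolding ucp_meq_def
  proof
    fix p assume p: "p \<in> UFuns Q"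
    have e: "ucp_comp AA BB p = rcp Q p []" "ucp_id Q p = rcp Q p []"
      by (simp_all add: ucp_comp_def uext_def BB_def AA_def ucp_id_def rcp_def)
    show "peq T (ucp_comp AA BB p) (ucp_id Q p)"
    proof -
      have "path_ok T (Inl (usrc Q p)) (snd (rcp Q p [])) (Inr (utgt Q p))"
        using rcp_path[OF p, of "[]" "utgt Q p"] Q_sorts[OF p] by simp
      then have "peq T (Inl (usrc Q p), snd (rcp Q p [])) (Inl (usrc Q p), snd (rcp Q p []))" by (rule peq_refl)
      then show ?thesis unfolding e by (simp add: rcp_def)
    qed
  qed
qed

end


lemma comp_meq:
  fixes C :: "('c,'fc) catp" and D :: "('d,'fd) catp" and P :: "('c,'d,'fc,'fd,'g) currp"
    and Q :: "('c,'d,'fc,'fd,'h) currp" and R :: "('c,'d,'fc,'fd,'k) currp"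
  assumes P: "UC C D P" and Q: "UC C D Q" and R: "UC C D R"
    and F: "curr_mor C D P Q F" and G: "curr_mor C D Q R G"
  shows "ucp_meq C D (uncurry C P) (uncurry C R) (uncurry_mor (curr_comp G F))
          (ucp_comp (uncurry_mor G) (uncurry_mor F))"
  unfolding ucp_meq_def
proof
  fix p assume p: "p \<in> UFuns (uncurry C P)"
  obtain c x where px: "p = (c, x)" by (cases p)
  have c: "c \<in> Sorts C" "x \<in> Gens (Inst P c)" using p px by (auto simp: uncurry_def)
  have "term_ok D (Inst Q c) (F c x) (gsort (Inst P c) x)"
    using F c unfolding curr_mor_def inst_mor_def by auto
  then have tk: "term_ok D (Inst R c) (iapp (G c) (F c x)) (gsort (Inst P c) x)"
    using G c unfolding curr_mor_def by (intro iapp_term_ok) auto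
  have "(ucp_comp (uncurry_mor G) (uncurry_mor F) p :: ('c,'d,'fc,'fd,'c \<times> 'k) xpath) = ov c (iapp (G c) (F c x))"
    using px by (simp add: ucp_comp_def uext_ov[symmetric] uncurry_mor_def)
  moreover have "(uncurry_mor (curr_comp G F) p :: ('c,'d,'fc,'fd,'c \<times> 'k) xpath) = ov c (iapp (G c) (F c x))"
    using px by (simp add: uncurry_mor_def curr_comp_def icomp_def)
  ultimately show "peq (total C D (uncurry C R)) (uncurry_mor (curr_comp G F) p) (ucp_comp (uncurry_mor G) (uncurry_mor F) p)"
    using UC.ov_refl[OF R c(1) tk] by simp
qed

lemma fin_uncurry:
  assumes "wf_catp C" "fin_catp C" "fin_currp C P"
  shows "fin_ucp (uncurry C P)"
proof -
  have fs: "finite (Sorts C)" "finite (Funs C)" using assms(2) by (auto simp: fin_catp_def)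
  have fi: "\<And>c. c \<in> Sorts C \<Longrightarrow> finite (Gens (Inst P c)) \<and> finite (IEqs (Inst P c))"
    using assms(3) by (auto simp: fin_currp_def fin_instp_def)
  have "finite (Sigma (Sorts C) (\<lambda>c. Gens (Inst P c)))" using fs fi by auto
  moreover have "finite (UEqs (uncurry C P))"
  proof (rule finite_subset)
    show "UEqs (uncurry C P) \<subseteq> (\<lambda>(c, tt). (ov c (fst tt), ov c (snd tt))) ` Sigma (Sorts C) (\<lambda>c. IEqs (Inst P c))
      \<union> (\<lambda>(f, p). ((Inl (csrc C f), [Inl f, Inr (Inl (ctgt C f, p))]), ov (csrc C f) (Act P f p))) `
         Sigma (Funs C) (\<lambda>f. Gens (Inst P (ctgt C f)))"
      by (auto simp: uncurry_def image_iff) force+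
    have "finite (Sigma (Funs C) (\<lambda>f. Gens (Inst P (ctgt C f))))"
      using fs fi assms(1) unfolding wf_catp_def by auto
    moreover have "finite (Sigma (Sorts C) (\<lambda>c. IEqs (Inst P c)))" using fs fi by auto
    ultimately show "finite ((\<lambda>(c, tt). (ov c (fst tt), ov c (snd tt))) ` Sigma (Sorts C) (\<lambda>c. IEqs (Inst P c))
      \<union> (\<lambda>(f, p). ((Inl (csrc C f), [Inl f, Inr (Inl (ctgt C f, p))]), ov (csrc C f) (Act P f p))) `
         Sigma (Funs C) (\<lambda>f. Gens (Inst P (ctgt C f))))" by simp
  qed
  ultimately show ?thesis unfolding fin_ucp_def by (simp add: uncurry_def)
qed

lemma fin_curryP:
  assumes "fin_ucp Q"
  shows "fin_currp C (curryP C D Q)"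
  unfolding fin_currp_def fin_instp_def
proof (intro ballI conjI)
  fix c
  show "finite (Gens (Inst (curryP C D Q) c))"
    using assms by (auto simp: fin_ucp_def curryP_def ucp_at_def)
  have inj: "inj (\<lambda>((p, g), (p', g')). (rcp Q p g, rcp Q p' g'))"
    by (auto simp: inj_def rcp_def)
  have "IEqs (Inst (curryP C D Q) c) \<subseteq> (\<lambda>((p, g), (p', g')). (rcp Q p g, rcp Q p' g')) -` UEqs Q"
    by (auto simp: curryP_def ucp_at_def)
  moreover have "finite ((\<lambda>((p, g), (p', g')). (rcp Q p g, rcp Q p' g')) -` UEqs Q)"
    using assms inj by (intro finite_vimageI) (auto simp: fin_ucp_def)
  ultimately show "finite (IEqs (Inst (curryP C D Q) c))" by (rule finite_subset)
qed



theorem mainTheorem15: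
  fixes C :: "('c,'fc) catp" and D :: "('d,'fd) catp"
  assumes "wf_catp C" and "wf_catp D"
  shows
    \<comment> \<open>values in curryable presentations\<close>
    "(\<forall>P :: ('c,'d,'fc,'fd,'g) currp. wf_currp C D P \<longrightarrow>
        wf_ucp C D (uncurry C P) \<and> curryable C D (uncurry C P))
   \<comment> \<open>functor on morphisms, values in rightward morphisms\<close>
   \<and> (\<forall>(P :: ('c,'d,'fc,'fd,'g) currp) (Q :: ('c,'d,'fc,'fd,'h) currp) F.
        wf_currp C D P \<and> wf_currp C D Q \<and> curr_mor C D P Q F \<longrightarrow>
        ucp_mor C D (uncurry C P) (uncurry C Q) (uncurry_mor F) \<and>
        rightward D (uncurry C P) (uncurry C Q) (uncurry_mor F))
   \<comment> \<open>functoriality (up to provable equality)\<close>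
   \<and> (\<forall>P :: ('c,'d,'fc,'fd,'g) currp. wf_currp C D P \<longrightarrow>
        ucp_meq C D (uncurry C P) (uncurry C P) (uncurry_mor curr_id) (ucp_id (uncurry C P)))
   \<and> (\<forall>(P :: ('c,'d,'fc,'fd,'g) currp) (Q :: ('c,'d,'fc,'fd,'h) currp)
        (R :: ('c,'d,'fc,'fd,'k) currp) F G.
        wf_currp C D P \<and> wf_currp C D Q \<and> wf_currp C D R \<and>
        curr_mor C D P Q F \<and> curr_mor C D Q R G \<longrightarrow>
        ucp_meq C D (uncurry C P) (uncurry C R) (uncurry_mor (curr_comp G F))
          (ucp_comp (uncurry_mor G) (uncurry_mor F)))
   \<comment> \<open>preserves and reflects provable equality of morphisms (in particular faithful)\<close>
   \<and> (\<forall>(P :: ('c,'d,'fc,'fd,'g) currp) (Q :: ('c,'d,'fc,'fd,'h) currp) F G.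
        wf_currp C D P \<and> wf_currp C D Q \<and> curr_mor C D P Q F \<and> curr_mor C D P Q G \<longrightarrow>
        (curr_meq C D P Q F G \<longleftrightarrow>
         ucp_meq C D (uncurry C P) (uncurry C Q) (uncurry_mor F) (uncurry_mor G)))
   \<comment> \<open>full onto rightward morphisms\<close>
   \<and> (\<forall>(P :: ('c,'d,'fc,'fd,'g) currp) (Q :: ('c,'d,'fc,'fd,'h) currp) H.
        wf_currp C D P \<and> wf_currp C D Q \<and>
        ucp_mor C D (uncurry C P) (uncurry C Q) H \<and> rightward D (uncurry C P) (uncurry C Q) H \<longrightarrow>
        (\<exists>F. curr_mor C D P Q F \<and> ucp_meq C D (uncurry C P) (uncurry C Q) (uncurry_mor F) H))
   \<comment> \<open>essentially surjective onto Crble (isomorphism in Crble)\<close>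
   \<and> (\<forall>Q :: ('c,'d,'fc,'fd,'q) ucp. wf_ucp C D Q \<and> curryable C D Q \<longrightarrow>
        (\<exists>(P :: ('c,'d,'fc,'fd,'q) currp) A B. wf_currp C D P \<and>
           ucp_mor C D (uncurry C P) Q A \<and> rightward D (uncurry C P) Q A \<and>
           ucp_mor C D Q (uncurry C P) B \<and> rightward D Q (uncurry C P) B \<and>
           ucp_meq C D (uncurry C P) (uncurry C P) (ucp_comp B A) (ucp_id (uncurry C P)) \<and>
           ucp_meq C D Q Q (ucp_comp A B) (ucp_id Q)))
   \<comment> \<open>finite case: restriction FinCurr -> FinCrble is well-defined and essentially surjective\<close>
   \<and> (fin_catp C \<and> fin_catp D \<longrightarrow>
        (\<forall>P :: ('c,'d,'fc,'fd,'g) currp. wf_currp C D P \<and> fin_currp C P \<longrightarrow>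
            fin_ucp (uncurry C P))
      \<and> (\<forall>Q :: ('c,'d,'fc,'fd,'q) ucp. wf_ucp C D Q \<and> curryable C D Q \<and> fin_ucp Q \<longrightarrow>
        (\<exists>(P :: ('c,'d,'fc,'fd,'q) currp) A B. wf_currp C D P \<and> fin_currp C P \<and>
           ucp_mor C D (uncurry C P) Q A \<and> rightward D (uncurry C P) Q A \<and>
           ucp_mor C D Q (uncurry C P) B \<and> rightward D Q (uncurry C P) B \<and>
           ucp_meq C D (uncurry C P) (uncurry C P) (ucp_comp B A) (ucp_id (uncurry C P)) \<and>
           ucp_meq C D Q Q (ucp_comp A B) (ucp_id Q))))"
  proof -
  note UCI = UC.intro[OF assms(1,2)]
  note CQI = CQ.intro[OF assms(1,2)]
  have c1: "\<forall>P :: ('c,'d,'fc,'fd,'g) currp. wf_currp C D P \<longrightarrow> wf_ucp C D (uncurry C P) \<and> curryable C D (uncurry C P)"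
  proof (intro allI impI)
    fix P :: "('c,'d,'fc,'fd,'g) currp" assume "wf_currp C D P"
    then have u: "UC C D P" by (rule UCI)
    show "wf_ucp C D (uncurry C P) \<and> curryable C D (uncurry C P)"
      using UC.wf_UP[OF u] UC.curryable_UP[OF u] by (rule conjI)
  qed
  have c2: "\<forall>(P :: ('c,'d,'fc,'fd,'g) currp) (Q :: ('c,'d,'fc,'fd,'h) currp) F.
        wf_currp C D P \<and> wf_currp C D Q \<and> curr_mor C D P Q F \<longrightarrow>
        ucp_mor C D (uncurry C P) (uncurry C Q) (uncurry_mor F) \<and>
        rightward D (uncurry C P) (uncurry C Q) (uncurry_mor F)"
  proof (intro allI impI)
    fix P :: "('c,'d,'fc,'fd,'g) currp" and Q :: "('c,'d,'fc,'fd,'h) currp" and F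
    assume h: "wf_currp C D P \<and> wf_currp C D Q \<and> curr_mor C D P Q F"
    then have u: "UC2 C D P Q" by (intro UC2.intro UCI) auto
    then show "ucp_mor C D (uncurry C P) (uncurry C Q) (uncurry_mor F) \<and>
        rightward D (uncurry C P) (uncurry C Q) (uncurry_mor F)" using UC2.mor_F[OF u] h by simp
  qed
  have c3: "\<forall>P :: ('c,'d,'fc,'fd,'g) currp. wf_currp C D P \<longrightarrow>
        ucp_meq C D (uncurry C P) (uncurry C P) (uncurry_mor curr_id) (ucp_id (uncurry C P))"
  proof (intro allI impI)
    fix P :: "('c,'d,'fc,'fd,'g) currp" assume "wf_currp C D P"
    then have u: "UC C D P" by (rule UCI)
    show "ucp_meq C D (uncurry C P) (uncurry C P) (uncurry_mor curr_id) (ucp_id (uncurry C P))"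
      by (rule UC.id_meq[OF u])
  qed
  have c4: "\<forall>(P :: ('c,'d,'fc,'fd,'g) currp) (Q :: ('c,'d,'fc,'fd,'h) currp)
        (R :: ('c,'d,'fc,'fd,'k) currp) F G.
        wf_currp C D P \<and> wf_currp C D Q \<and> wf_currp C D R \<and>
        curr_mor C D P Q F \<and> curr_mor C D Q R G \<longrightarrow>
        ucp_meq C D (uncurry C P) (uncurry C R) (uncurry_mor (curr_comp G F))
          (ucp_comp (uncurry_mor G) (uncurry_mor F))"
  proof (intro allI impI)
    fix P :: "('c,'d,'fc,'fd,'g) currp" and Q :: "('c,'d,'fc,'fd,'h) currp"
      and R :: "('c,'d,'fc,'fd,'k) currp" and F G
    assume h: "wf_currp C D P \<and> wf_currp C D Q \<and> wf_currp C D R \<and>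
        curr_mor C D P Q F \<and> curr_mor C D Q R G"
    then have u: "UC C D P" "UC C D Q" "UC C D R" by (auto intro: UCI)
    then show "ucp_meq C D (uncurry C P) (uncurry C R) (uncurry_mor (curr_comp G F))
          (ucp_comp (uncurry_mor G) (uncurry_mor F))" using comp_meq[OF u] h by simp
  qed
  have c5: "\<forall>(P :: ('c,'d,'fc,'fd,'g) currp) (Q :: ('c,'d,'fc,'fd,'h) currp) F G.
        wf_currp C D P \<and> wf_currp C D Q \<and> curr_mor C D P Q F \<and> curr_mor C D P Q G \<longrightarrow>
        (curr_meq C D P Q F G \<longleftrightarrow>
         ucp_meq C D (uncurry C P) (uncurry C Q) (uncurry_mor F) (uncurry_mor G))"
  proof (intro allI impI)
    fix P :: "('c,'d,'fc,'fd,'g) currp" and Q :: "('c,'d,'fc,'fd,'h) currp" and F G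
    assume h: "wf_currp C D P \<and> wf_currp C D Q \<and> curr_mor C D P Q F \<and> curr_mor C D P Q G"
    then have u: "UC2 C D P Q" by (intro UC2.intro UCI) auto
    then show "curr_meq C D P Q F G \<longleftrightarrow>
         ucp_meq C D (uncurry C P) (uncurry C Q) (uncurry_mor F) (uncurry_mor G)" using UC2.faithful[OF u] h by simp
  qed
  have c6: "\<forall>(P :: ('c,'d,'fc,'fd,'g) currp) (Q :: ('c,'d,'fc,'fd,'h) currp) H.
        wf_currp C D P \<and> wf_currp C D Q \<and>
        ucp_mor C D (uncurry C P) (uncurry C Q) H \<and> rightward D (uncurry C P) (uncurry C Q) H \<longrightarrow>
        (\<exists>F. curr_mor C D P Q F \<and> ucp_meq C D (uncurry C P) (uncurry C Q) (uncurry_mor F) H)"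
  proof (intro allI impI)
    fix P :: "('c,'d,'fc,'fd,'g) currp" and Q :: "('c,'d,'fc,'fd,'h) currp" and H
    assume h: "wf_currp C D P \<and> wf_currp C D Q \<and>
        ucp_mor C D (uncurry C P) (uncurry C Q) H \<and> rightward D (uncurry C P) (uncurry C Q) H"
    then have u: "UC2 C D P Q" by (intro UC2.intro UCI) auto
    then show "\<exists>F. curr_mor C D P Q F \<and> ucp_meq C D (uncurry C P) (uncurry C Q) (uncurry_mor F) H"
      using UC2.full[OF u] h by simp
  qed
  have c7: "\<forall>Q :: ('c,'d,'fc,'fd,'q) ucp. wf_ucp C D Q \<and> curryable C D Q \<longrightarrow>
        (\<exists>(P :: ('c,'d,'fc,'fd,'q) currp) A B. wf_currp C D P \<and>
           ucp_mor C D (uncurry C P) Q A \<and> rightward D (uncurry C P) Q A \<and>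
           ucp_mor C D Q (uncurry C P) B \<and> rightward D Q (uncurry C P) B \<and>
           ucp_meq C D (uncurry C P) (uncurry C P) (ucp_comp B A) (ucp_id (uncurry C P)) \<and>
           ucp_meq C D Q Q (ucp_comp A B) (ucp_id Q))"
  proof (intro allI impI)
    fix Q :: "('c,'d,'fc,'fd,'q) ucp"
    assume "wf_ucp C D Q \<and> curryable C D Q"
    then have cq: "CQ C D Q" by (intro CQI) auto
    show "\<exists>(P :: ('c,'d,'fc,'fd,'q) currp) A B. wf_currp C D P \<and>
           ucp_mor C D (uncurry C P) Q A \<and> rightward D (uncurry C P) Q A \<and>
           ucp_mor C D Q (uncurry C P) B \<and> rightward D Q (uncurry C P) B \<and>
           ucp_meq C D (uncurry C P) (uncurry C P) (ucp_comp B A) (ucp_id (uncurry C P)) \<and>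
           ucp_meq C D Q Q (ucp_comp A B) (ucp_id Q)"
      using CQ.wf_PP[OF cq] CQ.ess[OF cq] by (intro exI conjI) (elim conjE, assumption)+
  qed
  have c8: "fin_catp C \<and> fin_catp D \<longrightarrow>
        (\<forall>P :: ('c,'d,'fc,'fd,'g) currp. wf_currp C D P \<and> fin_currp C P \<longrightarrow>
            fin_ucp (uncurry C P))
      \<and> (\<forall>Q :: ('c,'d,'fc,'fd,'q) ucp. wf_ucp C D Q \<and> curryable C D Q \<and> fin_ucp Q \<longrightarrow>
        (\<exists>(P :: ('c,'d,'fc,'fd,'q) currp) A B. wf_currp C D P \<and> fin_currp C P \<and>
           ucp_mor C D (uncurry C P) Q A \<and> rightward D (uncurry C P) Q A \<and>
           ucp_mor C D Q (uncurry C P) B \<and> rightward D Q (uncurry C P) B \<and>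
           ucp_meq C D (uncurry C P) (uncurry C P) (ucp_comp B A) (ucp_id (uncurry C P)) \<and>
           ucp_meq C D Q Q (ucp_comp A B) (ucp_id Q)))"
  proof (intro impI conjI)
    assume fin: "fin_catp C \<and> fin_catp D"
    show "\<forall>P :: ('c,'d,'fc,'fd,'g) currp. wf_currp C D P \<and> fin_currp C P \<longrightarrow> fin_ucp (uncurry C P)"
      using fin_uncurry[OF assms(1)] fin by auto
    show "\<forall>Q :: ('c,'d,'fc,'fd,'q) ucp. wf_ucp C D Q \<and> curryable C D Q \<and> fin_ucp Q \<longrightarrow>
        (\<exists>(P :: ('c,'d,'fc,'fd,'q) currp) A B. wf_currp C D P \<and> fin_currp C P \<and>
           ucp_mor C D (uncurry C P) Q A \<and> rightward D (uncurry C P) Q A \<and>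
           ucp_mor C D Q (uncurry C P) B \<and> rightward D Q (uncurry C P) B \<and>
           ucp_meq C D (uncurry C P) (uncurry C P) (ucp_comp B A) (ucp_id (uncurry C P)) \<and>
           ucp_meq C D Q Q (ucp_comp A B) (ucp_id Q))"
    proof (intro allI impI)
      fix Q :: "('c,'d,'fc,'fd,'q) ucp"
      assume h: "wf_ucp C D Q \<and> curryable C D Q \<and> fin_ucp Q"
      then have cq: "CQ C D Q" by (intro CQI) auto
      show "\<exists>(P :: ('c,'d,'fc,'fd,'q) currp) A B. wf_currp C D P \<and> fin_currp C P \<and>
           ucp_mor C D (uncurry C P) Q A \<and> rightward D (uncurry C P) Q A \<and>
           ucp_mor C D Q (uncurry C P) B \<and> rightward D Q (uncurry C P) B \<and>
           ucp_meq C D (uncurry C P) (uncurry C P) (ucp_comp B A) (ucp_id (uncurry C P)) \<and>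
           ucp_meq C D Q Q (ucp_comp A B) (ucp_id Q)"
        using CQ.wf_PP[OF cq] CQ.ess[OF cq] fin_curryP[of Q C D] h by (intro exI conjI) (elim conjE, assumption)+
    qed
  qed
  show ?thesis using c1 c2 c3 c4 c5 c6 c7 c8 by (intro conjI)
qed

end
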